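(* Consider an imprecise hidden Markov model as in the context with fixed output sequence $o_{1:n}$, under the positivity assumption. Let $k\in\{1,\dots,n-1\}$, $z_{k-1}\in\mathcal{X}_{k-1}$ and $s\in\{k,\dots,n\}$, and let $\hat{x}_{k:s-1}$ be any prefix kept while performing the optimal tree construction (for $s=k$ this is the empty sequence). Then there is at least one $x_s\in\mathcal{X}_s$ such that some element of $\mathrm{Mog}(\mathcal{X}_{k:n}\mid z_{k-1},o_{k:n})$ begins with $\hat{x}_{k:s-1}\oplus x_s$ and $\alpha^{\max}_s(x_s)\ge\alpha^{\mathrm{opt}}_k(\hat{x}_{k:s-1}\oplus x_s\mid z_{k-1})$.
   Context: Setting: $n\ge1$; $\mathcal{X}_0=\{x_0\}$ a singleton; finite non-empty $\mathcal{X}_1,\dots,\mathcal{X}_n$, $\mathcal{O}_1,\dots,\mathcal{O}_n$; $\mathcal{X}_{k:\ell}=\times_{r=k}^\ell\mathcal{X}_r$, similarly $\mathcal{O}_{k:\ell}$; $\oplus$ is concatenation. Coherent lower previsions $\underline{P}$: $\underline{P}(f)\ge\min f$, $\underline{P}(\lambda f)=\lambda\underline{P}(f)$ ($\lambda\ge0$), $\underline{P}(f+g)\ge\underline{P}(f)+\underline{P}(g)$; $\overline{P}(f)=-\underline{P}(-f)$; $\underline{P}(A)=\underline{P}(\mathbb{I}_A)$. Local models: coherent $\underline{Q}_k(\cdot\mid z_{k-1})$ on gambles on $\mathcal{X}_k$ and $\underline{S}_k(\cdot\mid z_k)$ on gambles on $\mathcal{O}_k$. Joint models: $\underline{E}_n(\cdot\mid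 z_n):=\underline{S}_n(\cdot\mid z_n)$; for $k<n$, $\underline{E}_k(\cdot\mid X_k)$ is the conditionally independent natural extension of $\underline{S}_k(\cdot\mid X_k)$ and $\underline{P}_{k+1}(\cdot\mid X_k)$ (pointwise smallest separately coherent conditional lower prevision on gambles on $\mathcal{X}_{k+1:n}\times\mathcal{O}_{k:n}$ jointly coherent with and extending both, with $O_k$ and $(X_{k+1:n},O_{k+1:n})$ mutually epistemically irrelevant given $X_k$); $\underline{P}_k(f\mid z_{k-1}):=\underline{Q}_k\big(\sum_{z_k}\mathbb{I}_{\{z_k\}}\underline{E}_k(f(z_k,\cdot)\mid z_k)\mid z_{k-1}\big)$. Positivity: $\overline{Q}_k(\{z_k\}\mid z_{k-1})>0$, $\overline{S}_k(\{o_k\}\mid z_k)>0$ always. $\mathrm{opt}(\mathcal{X}_{k:n}\mid z_{k-1},o_{k:n})$: the $\hat{x}_{k:n}$ with $\underline{P}_k(\mathbb{I}_{o_{k:n}}[\mathbb{I}_{x_{k:n}}-\mathbb{I}_{\hat{x}_{k:n}}]\mid z_{k-1})\le0$ for all $x_{k:n}$. $\alpha_k(z_{k:n}):=\overline{S}_k(\{o_k\}\mid z_k)\prod_{i=k+1}^n\overline{S}_i(\{o_i\}\mid z_i)\overline{Q}_i(\{z_i\}\mid z_{i-1})$, $\beta_k$ the same with lower previsions; $\alpha^{\max}_k(x_k)$, $\beta^{\max}_k(x_k)$ their maxima over $z_{k:n}$ with $z_k=x_k$; $\tau_k(x_k,\hat{x}_k\mid z_{k-1}):=\min\{a\ge0:\underline{Q}_k(\mathbb{I}_{\{x_k\}}-a\mathbb{I}_{\{\hat{x}_k\}}\mid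 z_{k-1})\le0\}$; $\alpha^{\mathrm{opt}}_k(\hat{x}_k\mid z_{k-1}):=\max_{x_k\neq\hat{x}_k}\beta^{\max}_k(x_k)\tau_k(x_k,\hat{x}_k\mid z_{k-1})$ and for $s>k$, $\alpha^{\mathrm{opt}}_k(z_{k:s}\mid z_{k-1}):=\alpha^{\mathrm{opt}}_k(z_{k:s-1}\mid z_{k-1})/(\overline{S}_{s-1}(\{o_{s-1}\}\mid z_{s-1})\overline{Q}_s(\{z_s\}\mid z_{s-1}))$. $\mathrm{Pos}_k(z_{k-1}):=\{z_k:\underline{Q}_k(\{z_k\}\mid z_{k-1})>0,\ \underline{S}_k(\{o_k\}\mid z_k)>0\}$; for $k<n$, $\mathrm{Mog}(\mathcal{X}_{k:n}\mid z_{k-1},o_{k:n}):=\bigcup_{z_k\in\mathrm{Pos}_k(z_{k-1})}z_k\oplus\mathrm{opt}(\mathcal{X}_{k+1:n}\mid z_k,o_{k+1:n})\cup\bigcup_{z_k\notin\mathrm{Pos}_k(z_{k-1})}z_k\oplus\mathcal{X}_{k+1:n}$. Optimal tree construction: keep the $\hat{x}_k$ with $\alpha^{\max}_k(\hat{x}_k)\ge\alpha^{\mathrm{opt}}_k(\hat{x}_k\mid z_{k-1})$; then for $s=k+1,\dots,n$, extend each kept prefix $\hat{x}_{k:s-1}$ by those $x_s$ for which some element of $\mathrm{Mog}(\mathcal{X}_{k:n}\mid z_{k-1},o_{k:n})$ begins with $\hat{x}_{k:s-1}\oplus x_s$ and $\alpha^{\max}_s(x_s)\ge\alpha^{\mathrm{opt}}_k(\hat{x}_{k:s-1}\oplus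 x_s\mid z_{k-1})$. *)

theory Defs
  imports "HOL-Analysis.Analysis"
begin

text \<open>A gamble on a finite set A is represented by a real function on the ambient type;
  a lower prevision on gambles on A is a functional that only depends on the values on A.\<close>

definition coherent_lp :: "'a set \<Rightarrow> (('a \<Rightarrow> real) \<Rightarrow> real) \<Rightarrow> bool" where
  "coherent_lp A P \<longleftrightarrow>
     (\<forall>f g. (\<forall>x\<in>A. f x = g x) \<longrightarrow> P f = P g) \<and>
     (\<forall>f. P f \<ge> Min (f ` A)) \<and>
     (\<forall>f (l::real). l \<ge> 0 \<longrightarrow> P (\<lambda>x. l * f x) = l * P f) \<and>
     (\<forall>f g. P (\<lambda>x. f x + g x) \<ge> P f + P g)"

definition upper :: "(('a \<Rightarrow> real) \<Rightarrow> real) \<Rightarrow> ('a \<Rightarrow> real) \<Rightarrow> real" where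
  "upper P f = - P (\<lambda>x. - f x)"

definition ind :: "'a \<Rightarrow> 'a \<Rightarrow> real" where
  "ind a = (\<lambda>x. if x = a then 1 else 0)"

text \<open>Sequences: seqs A k l is the set of lists z_{k:l} with z_i in A i (empty list if l < k).\<close>

definition seqs :: "(nat \<Rightarrow> 'a set) \<Rightarrow> nat \<Rightarrow> nat \<Rightarrow> 'a list set" where
  "seqs A k l = {xs. length xs = Suc l - k \<and> (\<forall>i<length xs. xs ! i \<in> A (k + i))}"

text \<open>Independent natural extension (de Cooman, Miranda, Zaffalon) of a lower prevision P1 on
  gambles on A and a lower prevision P2 on gambles on B, applied to a gamble f on A x B.\<close>

definition ind_nat_ext :: "'a set \<Rightarrow> 'b set \<Rightarrow> (('a \<Rightarrow> real) \<Rightarrow> real) \<Rightarrow> (('b \<Rightarrow> real) \<Rightarrow> real)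
    \<Rightarrow> ('a \<Rightarrow> 'b \<Rightarrow> real) \<Rightarrow> real" where
  "ind_nat_ext A B P1 P2 f =
     Sup {Min {f a b - (h1 a b - P1 (\<lambda>a'. h1 a' b)) - (h2 a b - P2 (\<lambda>b'. h2 a b')) | a b. a \<in> A \<and> b \<in> B}
          | h1 h2. True}"

text \<open>Q k z_{k-1}: local transition model on gambles on X k; S k z_k: local emission model on
  gambles on Os k. Gambles on X_{k:n} x O_{k:n} are functions of pairs of lists.
  jointP Q S X Os n m z f = P_{n-m}(f | z) (the model E_{n-m} being the independent natural extension
  of S_{n-m} and P_{n-m+1}, and E_n = S_n).\<close>

fun jointP :: "(nat \<Rightarrow> 'x \<Rightarrow> ('x \<Rightarrow> real) \<Rightarrow> real) \<Rightarrow> (nat \<Rightarrow> 'x \<Rightarrow> ('o \<Rightarrow> real) \<Rightarrow> real)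
    \<Rightarrow> (nat \<Rightarrow> 'x set) \<Rightarrow> (nat \<Rightarrow> 'o set) \<Rightarrow> nat \<Rightarrow> nat \<Rightarrow> 'x
    \<Rightarrow> ('x list \<times> 'o list \<Rightarrow> real) \<Rightarrow> real" where
  "jointP Q S X Os n 0 zp f = Q n zp (\<lambda>z. S n z (\<lambda>ob. f ([z], [ob])))"
| "jointP Q S X Os n (Suc m) zp f =
     Q (n - Suc m) zp (\<lambda>z. ind_nat_ext (Os (n - Suc m)) (seqs X (n - m) n \<times> seqs Os (n - m) n)
        (S (n - Suc m) z) (jointP Q S X Os n m z) (\<lambda>ob b. f (z # fst b, ob # snd b)))"

definition lowerP where
  "lowerP Q S X Os n k zp f = jointP Q S X Os n (n - k) zp f"

definition alpha :: "(nat \<Rightarrow> 'x \<Rightarrow> ('x \<Rightarrow> real) \<Rightarrow> real) \<Rightarrow> (nat \<Rightarrow> 'x \<Rightarrow> ('o \<Rightarrow> real) \<Rightarrow> real)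
    \<Rightarrow> (nat \<Rightarrow> 'o) \<Rightarrow> nat \<Rightarrow> nat \<Rightarrow> 'x list \<Rightarrow> real" where
  "alpha Q S obs n k zs = upper (S k (zs ! 0)) (ind (obs k)) *
     (\<Prod>i\<in>{k+1..n}. upper (S i (zs ! (i - k))) (ind (obs i)) *
                     upper (Q i (zs ! (i - k - 1))) (ind (zs ! (i - k))))"

definition beta :: "(nat \<Rightarrow> 'x \<Rightarrow> ('x \<Rightarrow> real) \<Rightarrow> real) \<Rightarrow> (nat \<Rightarrow> 'x \<Rightarrow> ('o \<Rightarrow> real) \<Rightarrow> real)
    \<Rightarrow> (nat \<Rightarrow> 'o) \<Rightarrow> nat \<Rightarrow> nat \<Rightarrow> 'x list \<Rightarrow> real" where
  "beta Q S obs n k zs = S k (zs ! 0) (ind (obs k)) *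
     (\<Prod>i\<in>{k+1..n}. S i (zs ! (i - k)) (ind (obs i)) * Q i (zs ! (i - k - 1)) (ind (zs ! (i - k))))"

definition alpha_max where
  "alpha_max Q S X obs n k x = Max {alpha Q S obs n k zs | zs. zs \<in> seqs X k n \<and> zs ! 0 = x}"

definition beta_max where
  "beta_max Q S X obs n k x = Max {beta Q S obs n k zs | zs. zs \<in> seqs X k n \<and> zs ! 0 = x}"

definition tau :: "(nat \<Rightarrow> 'x \<Rightarrow> ('x \<Rightarrow> real) \<Rightarrow> real) \<Rightarrow> nat \<Rightarrow> 'x \<Rightarrow> 'x \<Rightarrow> 'x \<Rightarrow> real" where
  "tau Q k zp x xh = Inf {a. a \<ge> 0 \<and> Q k zp (\<lambda>y. ind x y - a * ind xh y) \<le> 0}"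

text \<open>Maximum over x_k different from xh; the inserted 0 only matters when X_k = {xh}
  (all candidate values are nonnegative).\<close>
definition alpha_opt1 where
  "alpha_opt1 Q S X obs n k zp xh =
     Max (insert 0 {beta_max Q S X obs n k x * tau Q k zp x xh | x. x \<in> X k \<and> x \<noteq> xh})"

text \<open>alpha_opt for z_{k:s} given as a nonempty list zs of length s - k + 1 (unfolded recursion).\<close>
definition alpha_opt where
  "alpha_opt Q S X obs n k zp zs =
     alpha_opt1 Q S X obs n k zp (zs ! 0) /
     (\<Prod>i\<in>{k+1..k + length zs - 1}. upper (S (i - 1) (zs ! (i - 1 - k))) (ind (obs (i - 1))) *
                                   upper (Q i (zs ! (i - 1 - k))) (ind (zs ! (i - k))))"

definition opt where
  "opt Q S X Os obs n k zp = {xh \<in> seqs X k n. \<forall>x \<in> seqs X k n.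
     lowerP Q S X Os n k zp (\<lambda>(xs, os). (if os = map obs [k..<Suc n] then 1 else 0) *
        ((if xs = x then 1 else 0) - (if xs = xh then 1 else 0))) \<le> 0}"

definition Pos where
  "Pos Q S X obs k zp = {z \<in> X k. Q k zp (ind z) > 0 \<and> S k z (ind (obs k)) > 0}"

definition Mog where
  "Mog Q S X Os obs n k zp =
     {z # y | z y. z \<in> Pos Q S X obs k zp \<and> y \<in> opt Q S X Os obs n (k + 1) z} \<union>
     {z # y | z y. z \<in> X k - Pos Q S X obs k zp \<and> y \<in> seqs X (k + 1) n}"

inductive kept for Q S X Os obs n k zp where
  first: "x \<in> X k \<Longrightarrow> alpha_max Q S X obs n k x \<ge> alpha_opt Q S X obs n k zp [x]
          \<Longrightarrow> kept Q S X Os obs n k zp [x]"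
| extend: "kept Q S X Os obs n k zp p \<Longrightarrow> length p \<le> n - k \<Longrightarrow> x \<in> X (k + length p)
          \<Longrightarrow> (\<exists>r. p @ [x] @ r \<in> Mog Q S X Os obs n k zp)
          \<Longrightarrow> alpha_max Q S X obs n (k + length p) x \<ge> alpha_opt Q S X obs n k zp (p @ [x])
          \<Longrightarrow> kept Q S X Os obs n k zp (p @ [x])"

end

theory Submission
  imports Defs
begin

section \<open>Generic coherence facts\<close>

locale cohA =
  fixes A :: "'a set" and P :: "('a \<Rightarrow> real) \<Rightarrow> real"
  assumes coh: "coherent_lp A P" and finA: "finite A" and neA: "A \<noteq> {}"
begin

lemma dom: "(\<And>x. x \<in> A \<Longrightarrow> f x = g x) \<Longrightarrow> P f = P g"
  using coh unfolding coherent_lp_def by blast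

lemma minb: "P f \<ge> Min (f ` A)"
  using coh unfolding coherent_lp_def by blast

lemma hom: "0 \<le> l \<Longrightarrow> P (\<lambda>x. l * f x) = l * P f"
  using coh unfolding coherent_lp_def by blast

lemma add: "P f + P g \<le> P (\<lambda>x. f x + g x)"
  using coh unfolding coherent_lp_def by blast

lemma zero: "P (\<lambda>x. 0) = 0"
  using hom[of 0 "\<lambda>x. 0"] by simp

lemma ge_min_pt: "(\<And>x. x \<in> A \<Longrightarrow> c \<le> f x) \<Longrightarrow> c \<le> P f"
proof -
  assume h: "\<And>x. x \<in> A \<Longrightarrow> c \<le> f x"
  have "c \<le> Min (f ` A)" using finA neA h by (auto intro: Min.boundedI)
  thus ?thesis using minb[of f] by linarith
qed

lemma mono: "(\<And>x. x \<in> A \<Longrightarrow> f x \<le> g x) \<Longrightarrow> P f \<le> P g"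
proof -
  assume h: "\<And>x. x \<in> A \<Longrightarrow> f x \<le> g x"
  have "P f + P (\<lambda>x. g x - f x) \<le> P (\<lambda>x. f x + (g x - f x))" by (rule add)
  moreover have "0 \<le> P (\<lambda>x. g x - f x)" using h by (intro ge_min_pt) auto
  ultimately show ?thesis by simp
qed

lemma const_ge: "c \<le> P (\<lambda>x. c)" by (rule ge_min_pt) simp

lemma const_le: "P (\<lambda>x. c) \<le> c"
proof -
  have "P (\<lambda>x. c) + P (\<lambda>x. - c) \<le> P (\<lambda>x. c + - c)" by (rule add)
  moreover have "- c \<le> P (\<lambda>x. - c)" by (rule const_ge)
  ultimately show ?thesis using zero by simp
qed

lemma add_const: "P (\<lambda>x. f x + c) = P f + c"
proof -
  have "P f + P (\<lambda>x. c) \<le> P (\<lambda>x. f x + c)" by (rule add)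
  hence 1: "P f + c \<le> P (\<lambda>x. f x + c)" using const_ge[of c] by linarith
  have "P (\<lambda>x. f x + c) + P (\<lambda>x. - c) \<le> P (\<lambda>x. (f x + c) + - c)" by (rule add)
  hence "P (\<lambda>x. f x + c) - c \<le> P f" using const_ge[of "-c"] by simp
  with 1 show ?thesis by linarith
qed

lemma le_upper: "P f \<le> upper P f"
proof -
  have "P f + P (\<lambda>x. - f x) \<le> P (\<lambda>x. f x + - f x)" by (rule add)
  thus ?thesis unfolding upper_def using zero by simp
qed

lemma upper_add: "P (\<lambda>x. f x + g x) \<le> upper P f + P g"
proof -
  have "P (\<lambda>x. f x + g x) + P (\<lambda>x. - f x) \<le> P (\<lambda>x. (f x + g x) + - f x)" by (rule add)
  thus ?thesis unfolding upper_def by simp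
qed

lemma scale_neg: "l \<le> 0 \<Longrightarrow> P (\<lambda>x. l * f x) = l * upper P f"
proof -
  assume "l \<le> 0"
  hence "P (\<lambda>x. (- l) * (- f x)) = (- l) * P (\<lambda>x. - f x)" by (intro hom) simp
  thus ?thesis unfolding upper_def by simp
qed

lemma upper_hom: "0 \<le> l \<Longrightarrow> upper P (\<lambda>x. l * f x) = l * upper P f"
proof -
  assume "0 \<le> l"
  hence "P (\<lambda>x. l * (- f x)) = l * P (\<lambda>x. - f x)" by (intro hom)
  thus ?thesis unfolding upper_def by simp
qed

lemma ind_nonneg: "0 \<le> P (ind a)"
  by (rule ge_min_pt) (simp add: ind_def)

lemma ind_upper_nonneg: "0 \<le> upper P (ind a)"
  using ind_nonneg[of a] le_upper[of "ind a"] by linarith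

lemma sum_super: "finite I \<Longrightarrow> (\<And>i. i \<in> I \<Longrightarrow> 0 \<le> w i) \<Longrightarrow>
   (\<Sum>i\<in>I. w i * P (f i)) \<le> P (\<lambda>x. \<Sum>i\<in>I. w i * f i x)"
proof (induction I rule: finite_induct)
  case empty thus ?case using zero by simp
next
  case (insert i I)
  have "(\<Sum>i\<in>insert i I. w i * P (f i)) = w i * P (f i) + (\<Sum>i\<in>I. w i * P (f i))"
    using insert by simp
  also have "\<dots> \<le> P (\<lambda>x. w i * f i x) + P (\<lambda>x. \<Sum>i\<in>I. w i * f i x)"
    using insert hom[of "w i" "f i"] by simp
  also have "\<dots> \<le> P (\<lambda>x. w i * f i x + (\<Sum>i\<in>I. w i * f i x))" by (rule add)
  also have "\<dots> = P (\<lambda>x. \<Sum>i\<in>insert i I. w i * f i x)" using insert by simp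
  finally show ?case .
qed

lemma Q2: "0 \<le> a \<Longrightarrow> 0 \<le> b \<Longrightarrow>
  P (\<lambda>u. a * ind y u - b * ind w u) \<le> a * upper P (ind y) - b * upper P (ind w)"
proof -
  assume a: "0 \<le> a" and b: "0 \<le> b"
  have "P (\<lambda>u. a * ind y u + (- b) * ind w u) \<le> upper P (\<lambda>u. a * ind y u) + P (\<lambda>u. (- b) * ind w u)"
    by (rule upper_add)
  also have "\<dots> = a * upper P (ind y) - b * upper P (ind w)"
    using upper_hom[OF a, of "ind y"] scale_neg[of "-b" "ind w"] b by simp
  finally show ?thesis by simp
qed

end

section \<open>Hahn-Banach on finite sets\<close>

lemma scale_ineq1: "(c::real) \<le> a - b \<Longrightarrow> 0 < t \<Longrightarrow> t * c \<le> t * a - t * b"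
  by (metis mult_left_mono less_eq_real_def right_diff_distrib)

lemma scale_ineq2: "(m::real) - u \<le> c \<Longrightarrow> 0 < r \<Longrightarrow> r * m - r * u \<le> r * c"
  by (metis mult_left_mono less_eq_real_def right_diff_distrib)

lemma HB:
  fixes U :: "('a \<Rightarrow> real) \<Rightarrow> real" and g :: "'a \<Rightarrow> real"
  assumes Uadd: "\<And>f h. U (\<lambda>x. f x + h x) \<le> U f + U h"
    and Uhom: "\<And>f c. 0 \<le> c \<Longrightarrow> U (\<lambda>x. c * f x) = c * U f"
    and fin: "finite C"
  shows "\<exists>p. \<forall>f l. (\<forall>x. x \<notin> C \<longrightarrow> f x = 0) \<longrightarrow>
            (\<Sum>x\<in>C. p x * f x) + l * U g \<le> U (\<lambda>x. f x + l * g x)"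
  using fin
proof (induction C rule: finite_induct)
  case empty
  have "l * U g \<le> U (\<lambda>x. l * g x)" for l
  proof (cases "0 \<le> l")
    case True thus ?thesis using Uhom[of l g] by simp
  next
    case False
    have "U (\<lambda>x. l * g x + (- l) * g x) \<le> U (\<lambda>x. l * g x) + U (\<lambda>x. (- l) * g x)" by (rule Uadd)
    moreover have "U (\<lambda>x. (- l) * g x) = - l * U g" using False Uhom[of "-l" g] by simp
    moreover have "U (\<lambda>x. 0) = 0" using Uhom[of 0 g] by simp
    ultimately show ?thesis by simp
  qed
  moreover have "(\<forall>x. f x = 0) \<Longrightarrow> (\<lambda>x. f x + l * g x) = (\<lambda>x. l * g x)" for f l by auto
  ultimately show ?case by auto
next
  case (insert a C)
  from insert.IH obtain p where p: "\<And>f l. (\<forall>x. x \<notin> C \<longrightarrow> f x = 0) \<Longrightarrow>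
            (\<Sum>x\<in>C. p x * f x) + l * U g \<le> U (\<lambda>x. f x + l * g x)" by blast
  define M where "M f l = (\<Sum>x\<in>C. p x * f x) + l * U g" for f l
  define Lo where "Lo = {M f l - U (\<lambda>x. f x + l * g x - ind a x) | f l. \<forall>x. x \<notin> C \<longrightarrow> f x = 0}"
  define Hi where "Hi = {U (\<lambda>x. f x + l * g x + ind a x) - M f l | f l. \<forall>x. x \<notin> C \<longrightarrow> f x = 0}"
  have key: "lo \<le> hi" if "lo \<in> Lo" "hi \<in> Hi" for lo hi
  proof -
    from that obtain f1 l1 f2 l2 where s1: "\<forall>x. x \<notin> C \<longrightarrow> f1 x = 0" and s2: "\<forall>x. x \<notin> C \<longrightarrow> f2 x = 0"
      and lo: "lo = M f1 l1 - U (\<lambda>x. f1 x + l1 * g x - ind a x)"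
      and hi: "hi = U (\<lambda>x. f2 x + l2 * g x + ind a x) - M f2 l2"
      unfolding Lo_def Hi_def by blast
    have "M f1 l1 + M f2 l2 = M (\<lambda>x. f1 x + f2 x) (l1 + l2)"
      unfolding M_def by (simp add: algebra_simps sum.distrib)
    also have "\<dots> \<le> U (\<lambda>x. (f1 x + f2 x) + (l1 + l2) * g x)"
      unfolding M_def using s1 s2 by (intro p) auto
    also have "(\<lambda>x. (f1 x + f2 x) + (l1 + l2) * g x) =
       (\<lambda>x. (f1 x + l1 * g x - ind a x) + (f2 x + l2 * g x + ind a x))"
      by (auto simp: algebra_simps)
    also have "U \<dots> \<le> U (\<lambda>x. f1 x + l1 * g x - ind a x) + U (\<lambda>x. f2 x + l2 * g x + ind a x)"
      by (rule Uadd)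
    finally show ?thesis unfolding lo hi by simp
  qed
  have "M (\<lambda>x. 0) 0 - U (\<lambda>x. 0 + 0 * g x - ind a x) \<in> Lo" unfolding Lo_def by blast
  hence Lone: "Lo \<noteq> {}" by blast
  have Hne: "(U (\<lambda>x. 0 + 0 * g x + ind a x) - M (\<lambda>x. 0) 0) \<in> Hi" unfolding Hi_def
    apply (rule CollectI) apply (rule exI[where x="\<lambda>x. 0"]) apply (rule exI[where x=0]) by simp
  have bdd: "bdd_above Lo" using key Hne unfolding bdd_above_def by blast
  define c where "c = Sup Lo"
  have c_le: "c \<le> hi" if "hi \<in> Hi" for hi unfolding c_def using Lone key that by (intro cSup_least) auto
  have c_ge: "lo \<le> c" if "lo \<in> Lo" for lo unfolding c_def using bdd that by (intro cSup_upper)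
  define p' where "p' = p(a := c)"
  show ?case
  proof (intro exI allI impI)
    fix f :: "'a \<Rightarrow> real" and l
    assume sf: "\<forall>x. x \<notin> insert a C \<longrightarrow> f x = 0"
    define f0 where "f0 = f(a := 0)"
    define t where "t = f a"
    have s0: "\<forall>x. x \<notin> C \<longrightarrow> f0 x = 0" using sf unfolding f0_def by auto
    have sumeq: "(\<Sum>x\<in>insert a C. p' x * f x) = t * c + (\<Sum>x\<in>C. p x * f0 x)"
    proof -
      have "(\<Sum>x\<in>insert a C. p' x * f x) = p' a * f a + (\<Sum>x\<in>C. p' x * f x)"
        using insert by simp
      moreover have "(\<Sum>x\<in>C. p' x * f x) = (\<Sum>x\<in>C. p x * f0 x)"
        using insert unfolding p'_def f0_def by (intro sum.cong) auto
      ultimately show ?thesis unfolding p'_def t_def by simp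
    qed
    have feq: "(\<lambda>x. f x + l * g x) = (\<lambda>x. f0 x + l * g x + t * ind a x)"
      unfolding f0_def t_def ind_def by auto
    have "t * c + M f0 l \<le> U (\<lambda>x. f0 x + l * g x + t * ind a x)"
    proof (cases "t = 0")
      case True
      have "(\<lambda>x. f0 x + l * g x + t * ind a x) = (\<lambda>x. f0 x + l * g x)" using True by simp
      thus ?thesis using True p[OF s0, of l] unfolding M_def by simp
    next
      case False
      show ?thesis
      proof (cases "t > 0")
        case True
        have "U (\<lambda>x. (\<lambda>x. f0 x / t) x + (l / t) * g x + ind a x) - M (\<lambda>x. f0 x / t) (l / t) \<in> Hi"
          unfolding Hi_def apply (rule CollectI) apply (rule exI[where x="\<lambda>x. f0 x / t"])
          apply (rule exI[where x="l / t"]) using s0 by simp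
        hence "c \<le> U (\<lambda>x. f0 x / t + (l / t) * g x + ind a x) - M (\<lambda>x. f0 x / t) (l / t)"
          using c_le by simp
        hence "t * c \<le> t * U (\<lambda>x. f0 x / t + (l / t) * g x + ind a x) - t * M (\<lambda>x. f0 x / t) (l / t)"
          using True by (rule scale_ineq1)
        moreover have "t * U (\<lambda>x. f0 x / t + (l / t) * g x + ind a x) =
            U (\<lambda>x. t * (f0 x / t + (l / t) * g x + ind a x))"
          using True Uhom by simp
        moreover have "(\<lambda>x. t * (f0 x / t + (l / t) * g x + ind a x)) = (\<lambda>x. f0 x + l * g x + t * ind a x)"
          using True by (auto simp: field_simps)
        moreover have "t * M (\<lambda>x. f0 x / t) (l / t) = M f0 l"
          unfolding M_def using True by (simp add: algebra_simps sum_distrib_left)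
        ultimately show ?thesis by simp
      next
        case False
        define r where "r = - t"
        have r: "r > 0" using False \<open>t \<noteq> 0\<close> unfolding r_def by simp
        have "M (\<lambda>x. f0 x / r) (l / r) - U (\<lambda>x. (\<lambda>x. f0 x / r) x + (l / r) * g x - ind a x) \<in> Lo"
          unfolding Lo_def apply (rule CollectI) apply (rule exI[where x="\<lambda>x. f0 x / r"])
          apply (rule exI[where x="l / r"]) using s0 by simp
        hence "M (\<lambda>x. f0 x / r) (l / r) - U (\<lambda>x. f0 x / r + (l / r) * g x - ind a x) \<le> c"
          using c_ge by simp
        hence "r * M (\<lambda>x. f0 x / r) (l / r) - r * U (\<lambda>x. f0 x / r + (l / r) * g x - ind a x) \<le> r * c"
          using r by (rule scale_ineq2)
        moreover have "r * U (\<lambda>x. f0 x / r + (l / r) * g x - ind a x) =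
            U (\<lambda>x. r * (f0 x / r + (l / r) * g x - ind a x))"
          using r Uhom by simp
        moreover have "(\<lambda>x. r * (f0 x / r + (l / r) * g x - ind a x)) = (\<lambda>x. f0 x + l * g x + t * ind a x)"
          using r unfolding r_def by (auto simp: field_simps)
        moreover have "r * M (\<lambda>x. f0 x / r) (l / r) = M f0 l"
          unfolding M_def using r by (simp add: algebra_simps sum_distrib_left)
        ultimately show ?thesis unfolding r_def by simp
      qed
    qed
    thus "(\<Sum>x\<in>insert a C. p' x * f x) + l * U g \<le> U (\<lambda>x. f x + l * g x)"
      unfolding sumeq feq M_def by simp
  qed
qed

context cohA begin

lemma dominating: "\<exists>p. (\<forall>a\<in>A. 0 \<le> p a) \<and> sum p A = 1 \<and> (\<forall>f. P f \<le> (\<Sum>a\<in>A. p a * f a))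
   \<and> P g0 = (\<Sum>a\<in>A. p a * g0 a)"
proof -
  have Uadd: "upper P (\<lambda>x. f x + h x) \<le> upper P f + upper P h" for f h
  proof -
    have "P (\<lambda>x. - f x) + P (\<lambda>x. - h x) \<le> P (\<lambda>x. - f x + - h x)" by (rule add)
    thus ?thesis unfolding upper_def by simp
  qed
  have Uhom: "0 \<le> c \<Longrightarrow> upper P (\<lambda>x. c * f x) = c * upper P f" for c f by (rule upper_hom)
  obtain p where p: "\<And>f l. (\<forall>x. x \<notin> A \<longrightarrow> f x = 0) \<Longrightarrow>
     (\<Sum>x\<in>A. p x * f x) + l * upper P (\<lambda>x. - g0 x) \<le> upper P (\<lambda>x. f x + l * (- g0 x))"
    using HB[of "upper P", OF Uadd Uhom finA, of "\<lambda>x. - g0 x"] by blast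
  have domi: "P F \<le> (\<Sum>a\<in>A. p a * F a)" for F
  proof -
    have "(\<Sum>x\<in>A. p x * (if x \<in> A then - F x else 0)) + 0 * upper P (\<lambda>x. - g0 x)
        \<le> upper P (\<lambda>x. (if x \<in> A then - F x else 0) + 0 * (- g0 x))" by (rule p) auto
    moreover have "(\<Sum>x\<in>A. p x * (if x \<in> A then - F x else 0)) = - (\<Sum>x\<in>A. p x * F x)"
      by (simp add: sum_negf)
    moreover have "upper P (\<lambda>x. (if x \<in> A then - F x else 0) + 0 * (- g0 x)) = - P F"
      unfolding upper_def by (simp, intro arg_cong[where f=uminus] dom) auto
    ultimately show ?thesis by simp
  qed
  have att: "(\<Sum>a\<in>A. p a * g0 a) \<le> P g0"
  proof -
    have "(\<Sum>x\<in>A. p x * (if x \<in> A then g0 x else 0)) + 1 * upper P (\<lambda>x. - g0 x)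
        \<le> upper P (\<lambda>x. (if x \<in> A then g0 x else 0) + 1 * (- g0 x))" by (rule p) auto
    moreover have "(\<Sum>x\<in>A. p x * (if x \<in> A then g0 x else 0)) = (\<Sum>x\<in>A. p x * g0 x)"
      by simp
    moreover have "upper P (\<lambda>x. - g0 x) = - P g0" unfolding upper_def by simp
    moreover have "upper P (\<lambda>x. (if x \<in> A then g0 x else 0) + 1 * (- g0 x)) = 0"
    proof -
      have "P (\<lambda>x. - ((if x \<in> A then g0 x else 0) + 1 * (- g0 x))) = P (\<lambda>x. 0)"
        by (intro dom) auto
      thus ?thesis unfolding upper_def using zero by simp
    qed
    ultimately show ?thesis by simp
  qed
  have pos: "\<forall>a\<in>A. 0 \<le> p a"
  proof
    fix a assume a: "a \<in> A"
    have "P (ind a) \<le> (\<Sum>x\<in>A. p x * ind a x)" by (rule domi)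
    also have "(\<Sum>x\<in>A. p x * ind a x) = p a" using a finA unfolding ind_def
      by (simp add: if_distrib cong: if_cong)
    finally show "0 \<le> p a" using ind_nonneg[of a] by linarith
  qed
  have s1: "sum p A = 1"
  proof -
    have "P (\<lambda>x. 1) \<le> (\<Sum>x\<in>A. p x * 1)" by (rule domi)
    moreover have "P (\<lambda>x. -1) \<le> (\<Sum>x\<in>A. p x * -1)" by (rule domi)
    moreover have "1 \<le> P (\<lambda>x. 1)" by (rule const_ge)
    moreover have "-1 \<le> P (\<lambda>x. -1)" by (rule const_ge)
    ultimately show ?thesis by (simp add: sum_negf)
  qed
  show ?thesis using pos s1 domi att by (intro exI[of _ p]) (auto intro: order.antisym)
qed

end

locale ine = P1: cohA A P1 + P2: cohA B P2
  for A :: "'a set" and P1 and B :: "'b set" and P2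
begin

definition elem where
  "elem h1 h2 f = Min {f a b - (h1 a b - P1 (\<lambda>a'. h1 a' b)) - (h2 a b - P2 (\<lambda>b'. h2 a b')) | a b. a \<in> A \<and> b \<in> B}"

lemma INE_def': "ind_nat_ext A B P1 P2 f = Sup {elem h1 h2 f | h1 h2. True}"
  unfolding ind_nat_ext_def elem_def ..

lemma setAB: "{F a b | a b. a \<in> A \<and> b \<in> B} = (\<lambda>(a,b). F a b) ` (A \<times> B)" by auto

lemma finAB: "finite {F a b | a b. a \<in> A \<and> b \<in> B}" "{F a b | a b. a \<in> A \<and> b \<in> B} \<noteq> {}"
  unfolding setAB using P1.finA P2.finA P1.neA P2.neA by auto

lemma MinAB_le: "a \<in> A \<Longrightarrow> b \<in> B \<Longrightarrow> Min {F a b | a b. a \<in> A \<and> b \<in> B} \<le> F a b"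
  using finAB by (intro Min_le) auto

lemma MinAB_ge: "(\<And>a b. a \<in> A \<Longrightarrow> b \<in> B \<Longrightarrow> c \<le> F a b) \<Longrightarrow> c \<le> Min {F a b | a b. a \<in> A \<and> b \<in> B}"
  using finAB by (intro Min.boundedI) auto

lemma elem_ub:
  assumes p0: "\<forall>a\<in>A. 0 \<le> p a" and p1: "sum p A = 1" and pd: "\<forall>f. P1 f \<le> (\<Sum>a\<in>A. p a * f a)"
  shows "elem h1 h2 f \<le> P2 (\<lambda>b. \<Sum>a\<in>A. p a * f a b)"
proof -
  define e where "e = elem h1 h2 f"
  define g1 where "g1 a b = h1 a b - P1 (\<lambda>a'. h1 a' b)" for a b
  define g2 where "g2 a b = h2 a b - P2 (\<lambda>b'. h2 a b')" for a b
  have e: "e \<le> f a b - g1 a b - g2 a b" if "a \<in> A" "b \<in> B" for a b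
    unfolding e_def elem_def g1_def g2_def using that by (rule MinAB_le)
  have g1: "0 \<le> (\<Sum>a\<in>A. p a * g1 a b)" for b
  proof -
    have "P1 (\<lambda>a. g1 a b) \<le> (\<Sum>a\<in>A. p a * g1 a b)" using pd by blast
    moreover have "P1 (\<lambda>a. g1 a b) = 0"
      unfolding g1_def using P1.add_const[of "\<lambda>a. h1 a b" "- P1 (\<lambda>a'. h1 a' b)"] by simp
    ultimately show ?thesis by simp
  qed
  have g2: "P2 (\<lambda>b. g2 a b) = 0" for a
    unfolding g2_def using P2.add_const[of "\<lambda>b. h2 a b" "- P2 (\<lambda>b'. h2 a b')"] by simp
  have pt: "(\<Sum>a\<in>A. p a * g2 a b) + e \<le> (\<Sum>a\<in>A. p a * f a b)" if b: "b \<in> B" for b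
  proof -
    have "(\<Sum>a\<in>A. p a * (e + g1 a b + g2 a b)) \<le> (\<Sum>a\<in>A. p a * f a b)"
      using e b p0 by (intro sum_mono mult_left_mono) (auto simp: algebra_simps)
    moreover have "(\<Sum>a\<in>A. p a * (e + g1 a b + g2 a b)) =
        e * sum p A + (\<Sum>a\<in>A. p a * g1 a b) + (\<Sum>a\<in>A. p a * g2 a b)"
      by (simp add: algebra_simps sum.distrib sum_distrib_left sum_distrib_right)
    ultimately show ?thesis using g1[of b] p1 by simp
  qed
  have "P2 (\<lambda>b. (\<Sum>a\<in>A. p a * g2 a b) + e) \<le> P2 (\<lambda>b. \<Sum>a\<in>A. p a * f a b)"
    using pt by (intro P2.mono) auto
  moreover have "P2 (\<lambda>b. (\<Sum>a\<in>A. p a * g2 a b) + e) = P2 (\<lambda>b. (\<Sum>a\<in>A. p a * g2 a b)) + e"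
    by (rule P2.add_const)
  moreover have "(\<Sum>a\<in>A. p a * P2 (\<lambda>b. g2 a b)) \<le> P2 (\<lambda>b. (\<Sum>a\<in>A. p a * g2 a b))"
    using P2.sum_super[of A p "\<lambda>a b. g2 a b"] P1.finA p0 by auto
  ultimately show ?thesis using g2 unfolding e_def by simp
qed

lemma some_dom: "\<exists>p. (\<forall>a\<in>A. 0 \<le> p a) \<and> sum p A = 1 \<and> (\<forall>f. P1 f \<le> (\<Sum>a\<in>A. p a * f a))"
  using P1.dominating by blast

lemma bdd: "bdd_above {elem h1 h2 f | h1 h2. True}"
proof -
  obtain p where "\<forall>a\<in>A. 0 \<le> p a" "sum p A = 1" "\<forall>f. P1 f \<le> (\<Sum>a\<in>A. p a * f a)"
    using some_dom by blast
  hence E: "elem h1 h2 f \<le> P2 (\<lambda>b. \<Sum>a\<in>A. p a * f a b)" for h1 h2 by (intro elem_ub)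
  show ?thesis
  proof (rule bdd_aboveI)
    fix x assume "x \<in> {elem h1 h2 f | h1 h2. True}"
    then obtain h1 h2 where "x = elem h1 h2 f" by blast
    thus "x \<le> P2 (\<lambda>b. \<Sum>a\<in>A. p a * f a b)" using E by simp
  qed
qed

lemma INE_ge: "elem h1 h2 f \<le> ind_nat_ext A B P1 P2 f"
  unfolding INE_def' apply (rule cSup_upper) apply blast by (rule bdd)

lemma INE_le:
  assumes "\<forall>a\<in>A. 0 \<le> p a" "sum p A = 1" "\<forall>f. P1 f \<le> (\<Sum>a\<in>A. p a * f a)"
  shows "ind_nat_ext A B P1 P2 f \<le> P2 (\<lambda>b. \<Sum>a\<in>A. p a * f a b)"
  unfolding INE_def' by (rule cSup_least) (use elem_ub[OF assms] in auto)

lemma INE_dom: "(\<And>a b. a \<in> A \<Longrightarrow> b \<in> B \<Longrightarrow> f a b = g a b) \<Longrightarrow>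
   ind_nat_ext A B P1 P2 f = ind_nat_ext A B P1 P2 g"
proof -
  assume h: "\<And>a b. a \<in> A \<Longrightarrow> b \<in> B \<Longrightarrow> f a b = g a b"
  have "elem h1 h2 f = elem h1 h2 g" for h1 h2
    unfolding elem_def setAB using h by (intro arg_cong[where f=Min] image_cong) auto
  thus ?thesis unfolding INE_def' by simp
qed

lemma INE_min: "Min {f a b | a b. a \<in> A \<and> b \<in> B} \<le> ind_nat_ext A B P1 P2 f"
proof -
  have "elem (\<lambda>a b. 0) (\<lambda>a b. 0) f = Min {f a b | a b. a \<in> A \<and> b \<in> B}"
    unfolding elem_def using P1.zero P2.zero by simp
  thus ?thesis using INE_ge[of "\<lambda>a b. 0" "\<lambda>a b. 0" f] by simp
qed

lemma INE_add: "ind_nat_ext A B P1 P2 f + ind_nat_ext A B P1 P2 g \<le>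
   ind_nat_ext A B P1 P2 (\<lambda>a b. f a b + g a b)"
proof -
  let ?I = "ind_nat_ext A B P1 P2"
  have E: "elem h1 h2 f + elem h1' h2' g \<le> ?I (\<lambda>a b. f a b + g a b)" for h1 h2 h1' h2'
  proof -
    have "elem h1 h2 f + elem h1' h2' g \<le> elem (\<lambda>a b. h1 a b + h1' a b) (\<lambda>a b. h2 a b + h2' a b) (\<lambda>a b. f a b + g a b)"
      unfolding elem_def
    proof (rule MinAB_ge)
      fix a b assume ab: "a \<in> A" "b \<in> B"
      have 1: "P1 (\<lambda>a'. h1 a' b) + P1 (\<lambda>a'. h1' a' b) \<le> P1 (\<lambda>a'. h1 a' b + h1' a' b)" by (rule P1.add)
      have 2: "P2 (\<lambda>b'. h2 a b') + P2 (\<lambda>b'. h2' a b') \<le> P2 (\<lambda>b'. h2 a b' + h2' a b')" by (rule P2.add)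
      have 3: "Min {f a b - (h1 a b - P1 (\<lambda>a'. h1 a' b)) - (h2 a b - P2 (\<lambda>b'. h2 a b')) |a b. a \<in> A \<and> b \<in> B}
        \<le> f a b - (h1 a b - P1 (\<lambda>a'. h1 a' b)) - (h2 a b - P2 (\<lambda>b'. h2 a b'))" using ab by (rule MinAB_le)
      have 4: "Min {g a b - (h1' a b - P1 (\<lambda>a'. h1' a' b)) - (h2' a b - P2 (\<lambda>b'. h2' a b')) |a b. a \<in> A \<and> b \<in> B}
        \<le> g a b - (h1' a b - P1 (\<lambda>a'. h1' a' b)) - (h2' a b - P2 (\<lambda>b'. h2' a b'))" using ab by (rule MinAB_le)
      show "Min {f a b - (h1 a b - P1 (\<lambda>a'. h1 a' b)) - (h2 a b - P2 (\<lambda>b'. h2 a b')) |a b. a \<in> A \<and> b \<in> B} +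
         Min {g a b - (h1' a b - P1 (\<lambda>a'. h1' a' b)) - (h2' a b - P2 (\<lambda>b'. h2' a b')) |a b. a \<in> A \<and> b \<in> B}
         \<le> f a b + g a b - (h1 a b + h1' a b - P1 (\<lambda>a'. h1 a' b + h1' a' b)) -
            (h2 a b + h2' a b - P2 (\<lambda>b'. h2 a b' + h2' a b'))"
        using 1 2 3 4 by linarith
    qed
    also have "\<dots> \<le> ?I (\<lambda>a b. f a b + g a b)" by (rule INE_ge)
    finally show ?thesis .
  qed
  have ne: "{elem h1 h2 f | h1 h2. True} \<noteq> {}" for f by auto
  have "?I f \<le> ?I (\<lambda>a b. f a b + g a b) - elem h1' h2' g" for h1' h2'
    unfolding INE_def'[of f] using E[of _ _ h1' h2'] by (intro cSup_least[OF ne]) (auto simp: algebra_simps)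
  hence "?I g \<le> ?I (\<lambda>a b. f a b + g a b) - ?I f"
    unfolding INE_def'[of g] by (intro cSup_least[OF ne]) (auto simp: algebra_simps)
  thus ?thesis by simp
qed

lemma elem_scale: "0 < l \<Longrightarrow> elem (\<lambda>a b. l * h1 a b) (\<lambda>a b. l * h2 a b) (\<lambda>a b. l * f a b) = l * elem h1 h2 f"
proof -
  assume l: "0 < l"
  have "{l * f a b - (l * h1 a b - P1 (\<lambda>a'. l * h1 a' b)) - (l * h2 a b - P2 (\<lambda>b'. l * h2 a b')) |a b. a \<in> A \<and> b \<in> B}
     = (\<lambda>x. l * x) ` {f a b - (h1 a b - P1 (\<lambda>a'. h1 a' b)) - (h2 a b - P2 (\<lambda>b'. h2 a b')) |a b. a \<in> A \<and> b \<in> B}"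
    unfolding setAB image_image using l P1.hom[of l] P2.hom[of l]
    by (intro image_cong) (auto simp: algebra_simps)
  moreover have "Min ((\<lambda>x. l * x) ` {f a b - (h1 a b - P1 (\<lambda>a'. h1 a' b)) - (h2 a b - P2 (\<lambda>b'. h2 a b')) |a b. a \<in> A \<and> b \<in> B})
     = l * Min {f a b - (h1 a b - P1 (\<lambda>a'. h1 a' b)) - (h2 a b - P2 (\<lambda>b'. h2 a b')) |a b. a \<in> A \<and> b \<in> B}"
    using l finAB by (intro mono_Min_commute[symmetric]) (auto simp: mono_def mult_left_mono)
  ultimately show ?thesis unfolding elem_def by simp
qed

lemma INE_zero: "ind_nat_ext A B P1 P2 (\<lambda>a b. 0) = 0"
proof -
  obtain p where p: "\<forall>a\<in>A. 0 \<le> p a" "sum p A = 1" "\<forall>f. P1 f \<le> (\<Sum>a\<in>A. p a * f a)"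
    using some_dom by blast
  have "ind_nat_ext A B P1 P2 (\<lambda>a b. 0) \<le> P2 (\<lambda>b. \<Sum>a\<in>A. p a * 0)" by (rule INE_le[OF p])
  moreover have "Min {(\<lambda>a b. 0::real) a b | a b. a \<in> A \<and> b \<in> B} \<le> ind_nat_ext A B P1 P2 (\<lambda>a b. 0)"
    by (rule INE_min)
  moreover have "Min {(\<lambda>a b. 0::real) a b | a b. a \<in> A \<and> b \<in> B} = 0"
    using finAB[of "\<lambda>a b. 0"] by (intro Min_eqI) auto
  ultimately show ?thesis using P2.zero by simp
qed

lemma INE_hom: "0 \<le> l \<Longrightarrow> ind_nat_ext A B P1 P2 (\<lambda>a b. l * f a b) = l * ind_nat_ext A B P1 P2 f"
proof -
  assume l0: "0 \<le> l"
  let ?I = "ind_nat_ext A B P1 P2"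
  show ?thesis
  proof (cases "l = 0")
    case True thus ?thesis using INE_zero by simp
  next
    case False
    hence l: "0 < l" using l0 by simp
    have ne: "{elem h1 h2 f | h1 h2. True} \<noteq> {}" for f by auto
    have 1: "?I (\<lambda>a b. l * f a b) \<le> l * ?I f"
      unfolding INE_def'[of "\<lambda>a b. l * f a b"]
    proof (rule cSup_least[OF ne])
      fix x assume "x \<in> {elem h1 h2 (\<lambda>a b. l * f a b) |h1 h2. True}"
      then obtain h1 h2 where x: "x = elem h1 h2 (\<lambda>a b. l * f a b)" by blast
      have "x = elem (\<lambda>a b. l * (h1 a b / l)) (\<lambda>a b. l * (h2 a b / l)) (\<lambda>a b. l * f a b)"
        unfolding x using l by simp
      also have "\<dots> = l * elem (\<lambda>a b. h1 a b / l) (\<lambda>a b. h2 a b / l) f" using l by (rule elem_scale)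
      also have "\<dots> \<le> l * ?I f" using l by (intro mult_left_mono INE_ge) auto
      finally show "x \<le> l * ?I f" .
    qed
    have "?I f \<le> ?I (\<lambda>a b. l * f a b) / l"
      unfolding INE_def'[of f]
    proof (rule cSup_least[OF ne])
      fix x assume "x \<in> {elem h1 h2 f |h1 h2. True}"
      then obtain h1 h2 where x: "x = elem h1 h2 f" by blast
      have "l * x = elem (\<lambda>a b. l * h1 a b) (\<lambda>a b. l * h2 a b) (\<lambda>a b. l * f a b)"
        unfolding x using l by (simp add: elem_scale)
      also have "\<dots> \<le> ?I (\<lambda>a b. l * f a b)" by (rule INE_ge)
      finally show "x \<le> ?I (\<lambda>a b. l * f a b) / l" using l by (simp add: field_simps)
    qed
    hence "l * ?I f \<le> ?I (\<lambda>a b. l * f a b)" using l by (simp add: field_simps)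
    with 1 show ?thesis by simp
  qed
qed

lemma INE_fact:
  assumes h: "\<And>a. a \<in> A \<Longrightarrow> 0 \<le> h a"
  shows "ind_nat_ext A B P1 P2 (\<lambda>a b. h a * g b) = P1 (\<lambda>a. h a * P2 g)"
proof -
  let ?I = "ind_nat_ext A B P1 P2"
  have hg: "P2 (\<lambda>b'. h a * g b') = h a * P2 g" if "a \<in> A" for a using h[OF that] by (rule P2.hom)
  have "elem (\<lambda>a b. h a * P2 g) (\<lambda>a b. h a * g b) (\<lambda>a b. h a * g b) = P1 (\<lambda>a. h a * P2 g)"
  proof -
    have "{h a * g b - (h a * P2 g - P1 (\<lambda>a'. h a' * P2 g)) - (h a * g b - P2 (\<lambda>b'. h a * g b')) |a b. a \<in> A \<and> b \<in> B}
       = (\<lambda>(a,b). P1 (\<lambda>a. h a * P2 g)) ` (A \<times> B)"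
      unfolding setAB using hg by (intro image_cong) auto
    also have "\<dots> = {P1 (\<lambda>a. h a * P2 g)}" using P1.neA P2.neA by auto
    finally have E: "{h a * g b - (h a * P2 g - P1 (\<lambda>a'. h a' * P2 g)) - (h a * g b - P2 (\<lambda>b'. h a * g b')) |a b. a \<in> A \<and> b \<in> B}
       = {P1 (\<lambda>a. h a * P2 g)}" .
    show ?thesis unfolding elem_def E by simp
  qed
  hence 1: "P1 (\<lambda>a. h a * P2 g) \<le> ?I (\<lambda>a b. h a * g b)" using INE_ge by metis
  obtain p where p0: "\<forall>a\<in>A. 0 \<le> p a" and p1: "sum p A = 1" and pd: "\<forall>f. P1 f \<le> (\<Sum>a\<in>A. p a * f a)"
     and pa: "P1 (\<lambda>a. h a * P2 g) = (\<Sum>a\<in>A. p a * (h a * P2 g))"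
    using P1.dominating[of "\<lambda>a. h a * P2 g"] by blast
  have "?I (\<lambda>a b. h a * g b) \<le> P2 (\<lambda>b. \<Sum>a\<in>A. p a * (h a * g b))" by (rule INE_le[OF p0 p1 pd])
  also have "(\<lambda>b. \<Sum>a\<in>A. p a * (h a * g b)) = (\<lambda>b. (\<Sum>a\<in>A. p a * h a) * g b)"
    by (rule ext) (simp add: sum_distrib_right mult.assoc)
  also have "P2 \<dots> = (\<Sum>a\<in>A. p a * h a) * P2 g" using p0 h by (intro P2.hom sum_nonneg) auto
  also have "\<dots> = P1 (\<lambda>a. h a * P2 g)" unfolding pa by (simp add: sum_distrib_right mult.assoc)
  finally show ?thesis using 1 by simp
qed

end

lemma all_less_Suc_nth: "(\<forall>i<Suc m. P i) \<longleftrightarrow> P 0 \<and> (\<forall>i<m. P (Suc i))"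
  using less_Suc_eq_0_disj by auto

lemma seqs_Cons: "j \<le> n \<Longrightarrow> (x # xs \<in> seqs A j n) = (x \<in> A j \<and> xs \<in> seqs A (Suc j) n)"
proof -
  assume j: "j \<le> n"
  have L: "(Suc (length xs) = Suc n - j) = (length xs = Suc n - Suc j)" using j by auto
  show ?thesis unfolding seqs_def mem_Collect_eq length_Cons L
    by (simp only: all_less_Suc_nth) auto
qed

lemma seqs_gt: "Suc n \<le> j \<Longrightarrow> seqs A j n = {[]}"
  unfolding seqs_def by auto

lemma seqs_len: "xs \<in> seqs A j n \<Longrightarrow> length xs = Suc n - j"
  unfolding seqs_def by auto

lemma seqs_nth: "xs \<in> seqs A j n \<Longrightarrow> i < length xs \<Longrightarrow> xs ! i \<in> A (j + i)"
  unfolding seqs_def by auto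

lemma seqs_cases: "j \<le> n \<Longrightarrow> xs \<in> seqs A j n \<Longrightarrow> \<exists>x xs'. xs = x # xs'"
  using seqs_len[of xs A j n] by (cases xs) auto

lemma seqs_ne: "(\<And>i. j \<le> i \<Longrightarrow> i \<le> n \<Longrightarrow> A i \<noteq> {}) \<Longrightarrow> seqs A j n \<noteq> {}"
proof (induction "Suc n - j" arbitrary: j)
  case 0 thus ?case using seqs_gt[of n j A] by auto
next
  case (Suc d)
  hence j: "j \<le> n" by auto
  have "seqs A (Suc j) n \<noteq> {}" using Suc by auto
  then obtain xs where xs: "xs \<in> seqs A (Suc j) n" by blast
  obtain x where "x \<in> A j" using Suc j by blast
  hence "x # xs \<in> seqs A j n" using seqs_Cons[OF j, of x xs A] xs by simp
  thus ?case by blast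
qed

lemma seqs_fin: "(\<And>i. j \<le> i \<Longrightarrow> i \<le> n \<Longrightarrow> finite (A i)) \<Longrightarrow> finite (seqs A j n)"
proof -
  assume f: "\<And>i. j \<le> i \<Longrightarrow> i \<le> n \<Longrightarrow> finite (A i)"
  have "seqs A j n \<subseteq> {xs. set xs \<subseteq> (\<Union>i\<in>{j..n}. A i) \<and> length xs = Suc n - j}"
  proof
    fix xs assume xs: "xs \<in> seqs A j n"
    have "set xs \<subseteq> (\<Union>i\<in>{j..n}. A i)"
    proof
      fix x assume "x \<in> set xs"
      then obtain i where i: "i < length xs" "xs ! i = x" by (auto simp: in_set_conv_nth)
      thus "x \<in> (\<Union>i\<in>{j..n}. A i)" using seqs_nth[OF xs i(1)] seqs_len[OF xs] by force
    qed
    thus "xs \<in> {xs. set xs \<subseteq> (\<Union>i\<in>{j..n}. A i) \<and> length xs = Suc n - j}" using seqs_len[OF xs] by auto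
  qed
  moreover have "finite {xs. set xs \<subseteq> (\<Union>i\<in>{j..n}. A i) \<and> length xs = Suc n - j}"
    using f by (intro finite_lists_length_eq) auto
  ultimately show ?thesis by (rule finite_subset)
qed

lemma seqs_append: "j + length u \<le> Suc n \<Longrightarrow>
   (u @ c \<in> seqs A j n) = ((\<forall>i<length u. u ! i \<in> A (j + i)) \<and> c \<in> seqs A (j + length u) n)"
proof (induction u arbitrary: j)
  case Nil thus ?case by simp
next
  case (Cons v u)
  hence j: "j \<le> n" by simp
  have "((v # u) @ c \<in> seqs A j n) = (v \<in> A j \<and> u @ c \<in> seqs A (Suc j) n)"
    using seqs_Cons[OF j] by simp
  also have "\<dots> = (v \<in> A j \<and> (\<forall>i<length u. u ! i \<in> A (Suc j + i)) \<and> c \<in> seqs A (Suc j + length u) n)"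
    using Cons by simp
  also have "\<dots> = ((\<forall>i<length (v # u). (v # u) ! i \<in> A (j + i)) \<and> c \<in> seqs A (j + length (v # u)) n)"
    by (simp only: length_Cons all_less_Suc_nth) simp
  finally show ?case .
qed

lemma cohA_I: "coherent_lp A P \<Longrightarrow> finite A \<Longrightarrow> A \<noteq> {} \<Longrightarrow> cohA A P"
  unfolding cohA_def by blast

lemma coh_compose:
  fixes F :: "'u \<Rightarrow> ('d \<Rightarrow> real) \<Rightarrow> real" and Dd :: "'d set"
  assumes Q: "cohA A Qz" and fD: "finite Dd"
    and Fd: "\<And>u f g. u \<in> A \<Longrightarrow> (\<And>d. d \<in> Dd \<Longrightarrow> f d = g d) \<Longrightarrow> F u f = F u g"
    and Fm: "\<And>u f. u \<in> A \<Longrightarrow> Min (f ` Dd) \<le> F u f"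
    and Fh: "\<And>u f l. u \<in> A \<Longrightarrow> 0 \<le> l \<Longrightarrow> F u (\<lambda>x. l * f x) = l * F u f"
    and Fa: "\<And>u f g. u \<in> A \<Longrightarrow> F u f + F u g \<le> F u (\<lambda>x. f x + g x)"
  shows "coherent_lp Dd (\<lambda>f. Qz (\<lambda>u. F u f))"
  unfolding coherent_lp_def
proof (intro conjI allI impI)
  fix f g :: "'d \<Rightarrow> real" assume "\<forall>x\<in>Dd. f x = g x"
  thus "Qz (\<lambda>u. F u f) = Qz (\<lambda>u. F u g)" using Fd by (intro cohA.dom[OF Q]) blast
next
  fix f :: "'d \<Rightarrow> real"
  have "Qz (\<lambda>u. Min (f ` Dd)) \<le> Qz (\<lambda>u. F u f)" using Fm by (intro cohA.mono[OF Q])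
  moreover have "Min (f ` Dd) \<le> Qz (\<lambda>u. Min (f ` Dd))" by (rule cohA.const_ge[OF Q])
  ultimately show "Min (f ` Dd) \<le> Qz (\<lambda>u. F u f)" by linarith
next
  fix f :: "'d \<Rightarrow> real" and l :: real assume l: "0 \<le> l"
  have "Qz (\<lambda>u. F u (\<lambda>x. l * f x)) = Qz (\<lambda>u. l * F u f)" using Fh l by (intro cohA.dom[OF Q]) blast
  also have "\<dots> = l * Qz (\<lambda>u. F u f)" using l by (rule cohA.hom[OF Q])
  finally show "Qz (\<lambda>u. F u (\<lambda>x. l * f x)) = l * Qz (\<lambda>u. F u f)" .
next
  fix f g :: "'d \<Rightarrow> real"
  have "Qz (\<lambda>u. F u f) + Qz (\<lambda>u. F u g) \<le> Qz (\<lambda>u. F u f + F u g)" by (rule cohA.add[OF Q])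
  also have "\<dots> \<le> Qz (\<lambda>u. F u (\<lambda>x. f x + g x))" using Fa by (intro cohA.mono[OF Q])
  finally show "Qz (\<lambda>u. F u f) + Qz (\<lambda>u. F u g) \<le> Qz (\<lambda>u. F u (\<lambda>x. f x + g x))" .
qed

locale hmm =
  fixes Q :: "nat \<Rightarrow> 'x \<Rightarrow> ('x \<Rightarrow> real) \<Rightarrow> real"
    and S :: "nat \<Rightarrow> 'x \<Rightarrow> ('o \<Rightarrow> real) \<Rightarrow> real"
    and X :: "nat \<Rightarrow> 'x set" and Os :: "nat \<Rightarrow> 'o set"
    and obs :: "nat \<Rightarrow> 'o" and n :: nat
  assumes n: "n \<ge> 1"
    and finX: "\<And>i. 1 \<le> i \<Longrightarrow> i \<le> n \<Longrightarrow> finite (X i) \<and> X i \<noteq> {}"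
    and finO: "\<And>i. 1 \<le> i \<Longrightarrow> i \<le> n \<Longrightarrow> finite (Os i) \<and> Os i \<noteq> {}"
    and obs: "\<And>i. 1 \<le> i \<Longrightarrow> i \<le> n \<Longrightarrow> obs i \<in> Os i"
    and cohQ: "\<And>i z. 1 \<le> i \<Longrightarrow> i \<le> n \<Longrightarrow> z \<in> X (i - 1) \<Longrightarrow> coherent_lp (X i) (Q i z)"
    and cohS: "\<And>i z. 1 \<le> i \<Longrightarrow> i \<le> n \<Longrightarrow> z \<in> X i \<Longrightarrow> coherent_lp (Os i) (S i z)"
    and posQ: "\<And>i z y. 1 \<le> i \<Longrightarrow> i \<le> n \<Longrightarrow> z \<in> X (i - 1) \<Longrightarrow> y \<in> X i
                 \<Longrightarrow> upper (Q i z) (ind y) > 0"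
    and posS: "\<And>i z ob. 1 \<le> i \<Longrightarrow> i \<le> n \<Longrightarrow> z \<in> X i \<Longrightarrow> ob \<in> Os i
                 \<Longrightarrow> upper (S i z) (ind ob) > 0"
begin

lemma QA: "1 \<le> i \<Longrightarrow> i \<le> n \<Longrightarrow> z \<in> X (i - 1) \<Longrightarrow> cohA (X i) (Q i z)"
  using cohQ finX by (intro cohA_I) auto

lemma SA: "1 \<le> i \<Longrightarrow> i \<le> n \<Longrightarrow> z \<in> X i \<Longrightarrow> cohA (Os i) (S i z)"
  using cohS finO by (intro cohA_I) auto

definition D where "D j = seqs X j n \<times> seqs Os j n"

lemma D_fin: "1 \<le> j \<Longrightarrow> finite (D j)"
  unfolding D_def using finX finO by (intro finite_cartesian_product seqs_fin) auto

lemma D_ne: "1 \<le> j \<Longrightarrow> D j \<noteq> {}"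
  unfolding D_def using finX finO seqs_ne[of j n X] seqs_ne[of j n Os] by auto

lemma D_Cons: assumes "j \<le> n" shows "((x # xs, ob # os) \<in> D j) = (x \<in> X j \<and> ob \<in> Os j \<and> (xs, os) \<in> D (Suc j))"
  unfolding D_def using seqs_Cons[OF assms, of x xs X] seqs_Cons[OF assms, of ob os Os] by auto

lemma D_gt: "D (Suc n) = {([], [])}"
  unfolding D_def by (simp add: seqs_gt)

lemma coh_joint_m: "m < n \<Longrightarrow> z \<in> X (n - m - 1) \<Longrightarrow> coherent_lp (D (n - m)) (jointP Q S X Os n m z)"
proof (induction m arbitrary: z)
  case 0
  have nn: "n - 0 = n" by simp
  have QQ: "cohA (X n) (Q n z)" using 0 n by (intro QA) auto
  have fD: "finite (D n)" using n by (intro D_fin)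
  have "coherent_lp (D n) (\<lambda>f. Q n z (\<lambda>u. S n u (\<lambda>ob. f ([u], [ob]))))"
  proof (rule coh_compose[OF QQ fD])
    fix u assume u: "u \<in> X n"
    have SS: "cohA (Os n) (S n u)" using u n by (intro SA) auto
    have mem: "([u], [ob]) \<in> D n" if "ob \<in> Os n" for ob
      using that u n D_Cons[of n u "[]" ob "[]"] D_gt by auto
    show "S n u (\<lambda>ob. f ([u], [ob])) = S n u (\<lambda>ob. g ([u], [ob]))" if "\<And>d. d \<in> D n \<Longrightarrow> f d = g d" for f g
      using that mem by (intro cohA.dom[OF SS]) auto
    show "Min (f ` D n) \<le> S n u (\<lambda>ob. f ([u], [ob]))" for f
    proof -
      have "Min (f ` D n) \<le> Min ((\<lambda>ob. f ([u], [ob])) ` Os n)"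
        using mem fD cohA.neA[OF SS] by (intro Min_antimono) auto
      thus ?thesis using cohA.minb[OF SS, of "\<lambda>ob. f ([u], [ob])"] by simp
    qed
    show "S n u (\<lambda>ob. (\<lambda>x. l * f x) ([u], [ob])) = l * S n u (\<lambda>ob. f ([u], [ob]))" if "0 \<le> l" for f l
      using cohA.hom[OF SS that] by simp
    show "S n u (\<lambda>ob. f ([u], [ob])) + S n u (\<lambda>ob. g ([u], [ob])) \<le> S n u (\<lambda>ob. (\<lambda>x. f x + g x) ([u], [ob]))" for f g
      using cohA.add[OF SS] by simp
  qed
  thus ?case by simp
next
  case (Suc m)
  define j where "j = n - Suc m"
  have j1: "1 \<le> j" and jn: "j < n" and nm: "n - m = Suc j" using Suc.prems unfolding j_def by auto
  have z: "z \<in> X (j - 1)" using Suc.prems(2) unfolding j_def .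
  have QQ: "cohA (X j) (Q j z)" using j1 jn z by (intro QA) auto
  have fD: "finite (D j)" using j1 by (intro D_fin)
  have mj: "n - m - 1 = j" using nm by simp
  have IH: "coherent_lp (D (Suc j)) (jointP Q S X Os n m u)" if "u \<in> X j" for u
  proof -
    have "m < n" using Suc.prems by simp
    moreover have "u \<in> X (n - m - 1)" using that mj by simp
    ultimately show ?thesis using Suc.IH[of u] nm by simp
  qed
  have I: "ine (Os j) (S j u) (D (Suc j)) (jointP Q S X Os n m u)" if u: "u \<in> X j" for u
  proof -
    have 1: "cohA (Os j) (S j u)" using j1 jn u by (intro SA) auto
    have 2: "cohA (D (Suc j)) (jointP Q S X Os n m u)"
      by (rule cohA_I[OF IH[OF u] D_fin D_ne]) simp_all
    show ?thesis unfolding ine_def using 1 2 by blast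
  qed
  have "coherent_lp (D j) (\<lambda>f. Q j z (\<lambda>u. ind_nat_ext (Os j) (D (Suc j)) (S j u) (jointP Q S X Os n m u)
          (\<lambda>ob b. f (u # fst b, ob # snd b))))"
  proof (rule coh_compose[OF QQ fD])
    fix u assume u: "u \<in> X j"
    note II = I[OF u]
    have mem: "(u # fst b, ob # snd b) \<in> D j" if "ob \<in> Os j" "b \<in> D (Suc j)" for ob b
      using D_Cons[of j u "fst b" ob "snd b"] that u jn by auto
    show "ind_nat_ext (Os j) (D (Suc j)) (S j u) (jointP Q S X Os n m u) (\<lambda>ob b. f (u # fst b, ob # snd b)) =
          ind_nat_ext (Os j) (D (Suc j)) (S j u) (jointP Q S X Os n m u) (\<lambda>ob b. g (u # fst b, ob # snd b))"
      if "\<And>d. d \<in> D j \<Longrightarrow> f d = g d" for f g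
      using that mem by (intro ine.INE_dom[OF II]) auto
    show "Min (f ` D j) \<le> ind_nat_ext (Os j) (D (Suc j)) (S j u) (jointP Q S X Os n m u) (\<lambda>ob b. f (u # fst b, ob # snd b))" for f
    proof -
      have "Min (f ` D j) \<le> Min {f (u # fst b, ob # snd b) |ob b. ob \<in> Os j \<and> b \<in> D (Suc j)}"
      proof (rule Min_antimono)
        show "{f (u # fst b, ob # snd b) |ob b. ob \<in> Os j \<and> b \<in> D (Suc j)} \<subseteq> f ` D j"
          using mem by blast
        show "{f (u # fst b, ob # snd b) |ob b. ob \<in> Os j \<and> b \<in> D (Suc j)} \<noteq> {}"
          by (rule ine.finAB(2)[OF II, of "\<lambda>ob b. f (u # fst b, ob # snd b)"])
        show "finite (f ` D j)" using fD by simp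
      qed
      thus ?thesis using ine.INE_min[OF II, of "\<lambda>ob b. f (u # fst b, ob # snd b)"] by simp
    qed
    show "ind_nat_ext (Os j) (D (Suc j)) (S j u) (jointP Q S X Os n m u) (\<lambda>ob b. (\<lambda>x. l * f x) (u # fst b, ob # snd b)) =
          l * ind_nat_ext (Os j) (D (Suc j)) (S j u) (jointP Q S X Os n m u) (\<lambda>ob b. f (u # fst b, ob # snd b))"
      if "0 \<le> l" for f l using ine.INE_hom[OF II that] by simp
    show "ind_nat_ext (Os j) (D (Suc j)) (S j u) (jointP Q S X Os n m u) (\<lambda>ob b. f (u # fst b, ob # snd b)) +
          ind_nat_ext (Os j) (D (Suc j)) (S j u) (jointP Q S X Os n m u) (\<lambda>ob b. g (u # fst b, ob # snd b))
          \<le> ind_nat_ext (Os j) (D (Suc j)) (S j u) (jointP Q S X Os n m u) (\<lambda>ob b. (\<lambda>x. f x + g x) (u # fst b, ob # snd b))"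
      for f g using ine.INE_add[OF II] by simp
  qed
  moreover have "jointP Q S X Os n (Suc m) z = (\<lambda>f. Q j z (\<lambda>u. ind_nat_ext (Os j) (D (Suc j)) (S j u) (jointP Q S X Os n m u)
          (\<lambda>ob b. f (u # fst b, ob # snd b))))"
  proof -
    have nm': "Suc (n - Suc m) = n - m" using Suc.prems by simp
    show ?thesis by (rule ext) (simp only: jointP.simps D_def j_def nm')
  qed
  moreover have "n - Suc m = j" unfolding j_def ..
  ultimately show ?case unfolding nm[symmetric] by simp
qed

lemma coh_joint: "1 \<le> j \<Longrightarrow> j \<le> n \<Longrightarrow> z \<in> X (j - 1) \<Longrightarrow> cohA (D j) (jointP Q S X Os n (n - j) z)"
  using coh_joint_m[of "n - j" z] D_fin D_ne by (intro cohA_I) auto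

end

context hmm begin

definition G :: "nat \<Rightarrow> ('x list \<Rightarrow> real) \<Rightarrow> 'x list \<times> 'o list \<Rightarrow> real" where "G j c = (\<lambda>(xs, os). (if os = map obs [j..<Suc n] then 1 else 0) * c xs)"
definition Rr :: "nat \<Rightarrow> 'x \<Rightarrow> ('x list \<Rightarrow> real) \<Rightarrow> real" where "Rr j z c = (if j \<le> n then jointP Q S X Os n (n - j) z (G j c) else c [])"
definition Tt :: "nat \<Rightarrow> 'x \<Rightarrow> real \<Rightarrow> real" where "Tt j u t = S j u (\<lambda>ob. ind (obs j) ob * t)"
definition Wr :: "nat \<Rightarrow> 'x \<Rightarrow> 'x list \<Rightarrow> real" where "Wr j z w = (if j \<le> n then upper (Q j z) (ind (w ! 0)) * alpha Q S obs n j w else 1)"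

lemma ind_nonneg': "0 \<le> ind a x" unfolding ind_def by simp

lemma Rr_rec:
  assumes j1: "1 \<le> j" and jn: "j \<le> n" and z: "z \<in> X (j - 1)"
  shows "Rr j z c = Q j z (\<lambda>u. Tt j u (Rr (Suc j) u (\<lambda>xs. c (u # xs))))"
proof (cases "j = n")
  case True
  have "Rr n z c = jointP Q S X Os n 0 z (G n c)" unfolding Rr_def by simp
  also have "\<dots> = Q n z (\<lambda>u. S n u (\<lambda>ob. G n c ([u], [ob])))" by simp
  also have "(\<lambda>u. S n u (\<lambda>ob. G n c ([u], [ob]))) = (\<lambda>u. Tt n u (Rr (Suc n) u (\<lambda>xs. c (u # xs))))"
    unfolding Tt_def Rr_def G_def ind_def by (auto simp: fun_eq_iff)
  finally show ?thesis using True by simp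
next
  case False
  hence jn': "j < n" using jn by simp
  have e: "n - j = Suc (n - Suc j)" "n - Suc (n - Suc j) = j" "n - (n - Suc j) = Suc j" using jn' by auto
  have QQ: "cohA (X j) (Q j z)" using j1 jn z by (intro QA)
  have "Rr j z c = Q j z (\<lambda>u. ind_nat_ext (Os j) (seqs X (Suc j) n \<times> seqs Os (Suc j) n) (S j u)
        (jointP Q S X Os n (n - Suc j) u) (\<lambda>ob b. G j c (u # fst b, ob # snd b)))"
    unfolding Rr_def using jn by (simp only: if_True e jointP.simps)
  also have "\<dots> = Q j z (\<lambda>u. Tt j u (Rr (Suc j) u (\<lambda>xs. c (u # xs))))"
  proof (rule cohA.dom[OF QQ])
    fix u assume u: "u \<in> X j"
    have I: "ine (Os j) (S j u) (D (Suc j)) (jointP Q S X Os n (n - Suc j) u)"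
      unfolding ine_def using SA[OF j1 jn u] coh_joint[of "Suc j" u] jn' u by simp
    have fe: "(\<lambda>ob b. G j c (u # fst b, ob # snd b)) =
       (\<lambda>ob b. ind (obs j) ob * G (Suc j) (\<lambda>xs. c (u # xs)) b)"
    proof (intro ext)
      fix ob and b :: "'x list \<times> 'o list"
      obtain xs os where b: "b = (xs, os)" by (cases b)
      have m: "[j..<Suc n] = j # [Suc j..<Suc n]" by (rule upt_conv_Cons) (use jn in simp)
      show "G j c (u # fst b, ob # snd b) = ind (obs j) ob * G (Suc j) (\<lambda>xs. c (u # xs)) b"
        unfolding b G_def ind_def m list.map(2) by (simp del: upt_Suc)
    qed
    have "ind_nat_ext (Os j) (seqs X (Suc j) n \<times> seqs Os (Suc j) n) (S j u)
        (jointP Q S X Os n (n - Suc j) u) (\<lambda>ob b. G j c (u # fst b, ob # snd b))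
      = ind_nat_ext (Os j) (D (Suc j)) (S j u)
        (jointP Q S X Os n (n - Suc j) u) (\<lambda>ob b. ind (obs j) ob * G (Suc j) (\<lambda>xs. c (u # xs)) b)"
      unfolding fe D_def ..
    also have "\<dots> = S j u (\<lambda>ob. ind (obs j) ob * jointP Q S X Os n (n - Suc j) u (G (Suc j) (\<lambda>xs. c (u # xs))))"
      by (rule ine.INE_fact[OF I]) (rule ind_nonneg')
    also have "\<dots> = Tt j u (Rr (Suc j) u (\<lambda>xs. c (u # xs)))"
      using jn' by (simp add: Tt_def Rr_def Suc_leI)
    finally show "ind_nat_ext (Os j) (seqs X (Suc j) n \<times> seqs Os (Suc j) n) (S j u)
        (jointP Q S X Os n (n - Suc j) u) (\<lambda>ob b. G j c (u # fst b, ob # snd b)) = Tt j u (Rr (Suc j) u (\<lambda>xs. c (u # xs)))" .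
  qed
  finally show ?thesis .
qed

lemma G_zero: "G j (\<lambda>_. 0) = (\<lambda>_. 0)"
  unfolding G_def by (auto simp: fun_eq_iff)

lemma Rr_zero: "1 \<le> j \<Longrightarrow> z \<in> X (j - 1) \<Longrightarrow> Rr j z (\<lambda>_. 0) = 0"
  unfolding Rr_def G_zero using coh_joint cohA.zero by fastforce

lemma Rr_upper: "1 \<le> j \<Longrightarrow> z \<in> X (j - 1) \<Longrightarrow> Rr j z c \<le> - Rr j z (\<lambda>xs. - c xs)"
proof -
  assume j1: "1 \<le> j" and z: "z \<in> X (j - 1)"
  show ?thesis
  proof (cases "j \<le> n")
    case True
    note C = coh_joint[OF j1 True z]
    have "jointP Q S X Os n (n - j) z (G j c) + jointP Q S X Os n (n - j) z (G j (\<lambda>xs. - c xs))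
       \<le> jointP Q S X Os n (n - j) z (\<lambda>x. G j c x + G j (\<lambda>xs. - c xs) x)" by (rule cohA.add[OF C])
    moreover have "(\<lambda>x. G j c x + G j (\<lambda>xs. - c xs) x) = (\<lambda>_. 0)"
      unfolding G_def by (auto simp: fun_eq_iff)
    ultimately show ?thesis unfolding Rr_def using True cohA.zero[OF C] by simp
  next
    case False thus ?thesis unfolding Rr_def by simp
  qed
qed

context
  fixes j u assumes j1: "1 \<le> j" and jn: "j \<le> n" and u: "u \<in> X j"
begin

lemma SS: "cohA (Os j) (S j u)" using SA[OF j1 jn u] .

lemma Tt_mono: "t1 \<le> t2 \<Longrightarrow> Tt j u t1 \<le> Tt j u t2"
  unfolding Tt_def by (intro cohA.mono[OF SS] mult_left_mono ind_nonneg')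

lemma Tt_zero: "Tt j u 0 = 0"
  unfolding Tt_def using cohA.zero[OF SS] by simp

lemma Tt_pos: "0 \<le> t \<Longrightarrow> Tt j u t = t * S j u (ind (obs j))"
  unfolding Tt_def using cohA.hom[OF SS, of t "ind (obs j)"] by (simp add: mult.commute)

lemma Tt_neg: "t \<le> 0 \<Longrightarrow> Tt j u t = t * upper (S j u) (ind (obs j))"
  unfolding Tt_def using cohA.scale_neg[OF SS, of t "ind (obs j)"] by (simp add: mult.commute)

lemma Sl_nonneg: "0 \<le> S j u (ind (obs j))" by (rule cohA.ind_nonneg[OF SS])

lemma Sl_le: "S j u (ind (obs j)) \<le> upper (S j u) (ind (obs j))" by (rule cohA.le_upper[OF SS])

lemma Su_pos: "0 < upper (S j u) (ind (obs j))" using posS[OF j1 jn u obs[OF j1 jn]] .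

lemma Tt_max: "Tt j u (max t 0) = max (Tt j u t) 0"
proof (cases "0 \<le> t")
  case True
  have "0 \<le> t * S j u (ind (obs j))" using True Sl_nonneg by simp
  thus ?thesis using True Tt_pos[OF True] by (simp add: max_def)
next
  case False
  hence "Tt j u t \<le> 0" using Tt_mono[of t 0] Tt_zero by simp
  thus ?thesis using False Tt_zero by (simp add: max_def)
qed

end

lemma alpha_cons:
  assumes jn: "j < n"
  shows "alpha Q S obs n j (v # w) = upper (S j v) (ind (obs j)) *
     (upper (Q (Suc j) v) (ind (w ! 0)) * alpha Q S obs n (Suc j) w)"
proof -
  define F where "F i = upper (S i ((v # w) ! (i - j))) (ind (obs i)) *
                     upper (Q i ((v # w) ! (i - j - 1))) (ind ((v # w) ! (i - j)))" for i
  define F' where "F' i = upper (S i (w ! (i - Suc j))) (ind (obs i)) *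
                     upper (Q i (w ! (i - Suc j - 1))) (ind (w ! (i - Suc j)))" for i
  have "(\<Prod>i\<in>{Suc j..n}. F i) = F (Suc j) * (\<Prod>i\<in>{Suc (Suc j)..n}. F i)"
    using jn by (intro prod.atLeast_Suc_atMost) simp
  moreover have "(\<Prod>i\<in>{Suc (Suc j)..n}. F i) = (\<Prod>i\<in>{Suc (Suc j)..n}. F' i)"
  proof (rule prod.cong)
    fix i assume i: "i \<in> {Suc (Suc j)..n}"
    hence e1: "i - j = Suc (i - Suc j)" and e2: "i - Suc j = Suc (i - Suc (Suc j))" by auto
    show "F i = F' i" unfolding F_def F'_def by (simp add: e1 e2)
  qed simp
  moreover have "F (Suc j) = upper (S (Suc j) (w ! 0)) (ind (obs (Suc j))) * upper (Q (Suc j) v) (ind (w ! 0))"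
    unfolding F_def by simp
  ultimately show ?thesis unfolding alpha_def F_def[symmetric] F'_def[symmetric]
    by (simp add: mult_ac)
qed

lemma alpha_last: "alpha Q S obs n n [v] = upper (S n v) (ind (obs n))"
  unfolding alpha_def by simp

lemma Wr_cons:
  assumes j1: "1 \<le> j" and jn: "j \<le> n" and w: "w \<in> seqs X (Suc j) n"
  shows "Wr j z (v # w) = upper (Q j z) (ind v) * (upper (S j v) (ind (obs j)) * Wr (Suc j) v w)"
proof (cases "j = n")
  case True
  hence "w = []" using w seqs_gt[of n "Suc j" X] by simp
  thus ?thesis unfolding Wr_def using True alpha_last by simp
next
  case False
  hence "j < n" using jn by simp
  thus ?thesis unfolding Wr_def using alpha_cons[of j v w] jn by simp
qed

lemma Wr_pos: "1 \<le> j \<Longrightarrow> j \<le> Suc n \<Longrightarrow> z \<in> X (j - 1) \<Longrightarrow> w \<in> seqs X j n \<Longrightarrow> 0 < Wr j z w"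
proof (induction "Suc n - j" arbitrary: j z w)
  case 0 thus ?case unfolding Wr_def by simp
next
  case (Suc d)
  hence jn: "j \<le> n" by simp
  obtain v w' where w: "w = v # w'" using seqs_cases[OF jn Suc.prems(4)] by blast
  have v: "v \<in> X j" and w': "w' \<in> seqs X (Suc j) n" using Suc.prems(4) seqs_Cons[OF jn, of v w' X] w by auto
  have "0 < Wr (Suc j) v w'" using Suc.hyps(1)[of "Suc j" v w'] Suc.hyps(2) jn v w' by simp
  moreover have "0 < upper (Q j z) (ind v)" using posQ[OF Suc.prems(1) jn Suc.prems(3) v] .
  moreover have "0 < upper (S j v) (ind (obs j))" using Su_pos[OF Suc.prems(1) jn v] .
  ultimately show ?case unfolding w Wr_cons[OF Suc.prems(1) jn w'] by simp
qed

end

context hmm begin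

definition Gd :: "'x list \<Rightarrow> 'x list \<Rightarrow> 'x list \<Rightarrow> real" where
  "Gd y w = (\<lambda>xs. (if xs = y then 1 else 0) - (if xs = w then 1 else 0))"

lemma seqs_jle: "v # w \<in> seqs A j n \<Longrightarrow> j \<le> n"
  using seqs_len[of "v # w" A j n] by simp

lemma Uexact: "1 \<le> j \<Longrightarrow> j \<le> Suc n \<Longrightarrow> z \<in> X (j - 1) \<Longrightarrow> w \<in> seqs X j n \<Longrightarrow>
  Rr j z (\<lambda>xs. - (if xs = w then 1 else 0)) = - Wr j z w"
proof (induction "Suc n - j" arbitrary: j z w)
  case 0
  hence j: "j = Suc n" by simp
  hence "w = []" using 0 seqs_gt[of n j X] by simp
  thus ?case unfolding Rr_def Wr_def using j by simp
next
  case (Suc d)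
  hence jn: "j \<le> n" by simp
  obtain v w' where w: "w = v # w'" using seqs_cases[OF jn Suc.prems(4)] by blast
  have v: "v \<in> X j" and w': "w' \<in> seqs X (Suc j) n" using Suc.prems(4) seqs_Cons[OF jn, of v w' X] w by auto
  note QQ = QA[OF Suc.prems(1) jn Suc.prems(3)]
  define K where "K = upper (S j v) (ind (obs j)) * Wr (Suc j) v w'"
  have Kpos: "0 < K" unfolding K_def using Su_pos[OF Suc.prems(1) jn v]
    Wr_pos[of "Suc j" v w'] jn v w' by simp
  have "Rr j z (\<lambda>xs. - (if xs = w then 1 else 0)) =
     Q j z (\<lambda>u. Tt j u (Rr (Suc j) u (\<lambda>xs. - (if u # xs = v # w' then 1 else 0))))"
    unfolding w by (rule Rr_rec[OF Suc.prems(1) jn Suc.prems(3)])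
  also have "\<dots> = Q j z (\<lambda>u. (- K) * ind v u)"
  proof (rule cohA.dom[OF QQ])
    fix u assume u: "u \<in> X j"
    show "Tt j u (Rr (Suc j) u (\<lambda>xs. - (if u # xs = v # w' then 1 else 0))) = (- K) * ind v u"
    proof (cases "u = v")
      case True
      have "Rr (Suc j) u (\<lambda>xs. - (if u # xs = v # w' then 1 else 0)) = - Wr (Suc j) v w'"
        using Suc.hyps(1)[of "Suc j" v w'] Suc.hyps(2) jn v w' True by simp
      moreover have "Wr (Suc j) v w' \<ge> 0" using Wr_pos[of "Suc j" v w'] jn v w' by simp
      ultimately show ?thesis using Tt_neg[OF Suc.prems(1) jn u] True unfolding K_def ind_def by simp
    next
      case False
      have "(\<lambda>xs. - (if u # xs = v # w' then 1 else 0::real)) = (\<lambda>_. 0)" using False by auto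
      moreover have "Rr (Suc j) u (\<lambda>_. 0) = 0" using u by (intro Rr_zero) auto
      ultimately show ?thesis using False Tt_zero[OF Suc.prems(1) jn u] unfolding ind_def by simp
    qed
  qed
  also have "\<dots> = (- K) * upper (Q j z) (ind v)" using Kpos by (intro cohA.scale_neg[OF QQ]) simp
  also have "\<dots> = - Wr j z w" unfolding w Wr_cons[OF Suc.prems(1) jn w'] K_def by simp
  finally show ?case .
qed

lemma Rr_ind_le: "1 \<le> j \<Longrightarrow> j \<le> Suc n \<Longrightarrow> z \<in> X (j - 1) \<Longrightarrow> y \<in> seqs X j n \<Longrightarrow>
  Rr j z (\<lambda>xs. if xs = y then 1 else 0) \<le> Wr j z y"
  using Rr_upper[of j z "\<lambda>xs. if xs = y then 1 else 0"] Uexact[of j z y] by simp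

lemma Wr_cons_pos: "1 \<le> j \<Longrightarrow> j \<le> n \<Longrightarrow> z \<in> X (j - 1) \<Longrightarrow> v \<in> X j \<Longrightarrow>
   0 < upper (Q j z) (ind v) * upper (S j v) (ind (obs j))"
  using posQ Su_pos by simp

lemma K0: "1 \<le> j \<Longrightarrow> j \<le> Suc n \<Longrightarrow> z \<in> X (j - 1) \<Longrightarrow> w \<in> seqs X j n \<Longrightarrow>
   (\<forall>c\<in>seqs X j n. Wr j z c \<le> Wr j z w) \<Longrightarrow> y \<in> seqs X j n \<Longrightarrow> Rr j z (Gd y w) \<le> 0"
proof (induction "Suc n - j" arbitrary: j z w y)
  case 0
  hence j: "j = Suc n" by simp
  hence "w = []" "y = []" using 0 seqs_gt[of n j X] by auto
  thus ?case unfolding Rr_def Gd_def using j by simp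
next
  case (Suc d)
  hence jn: "j \<le> n" and j1: "1 \<le> j" by auto
  obtain w0 w' where w: "w = w0 # w'" using seqs_cases[OF jn Suc.prems(4)] by blast
  obtain y0 y' where y: "y = y0 # y'" using seqs_cases[OF jn Suc.prems(6)] by blast
  have w0: "w0 \<in> X j" and w': "w' \<in> seqs X (Suc j) n" using Suc.prems(4) seqs_Cons[OF jn, of w0 w' X] w by auto
  have y0: "y0 \<in> X j" and y': "y' \<in> seqs X (Suc j) n" using Suc.prems(6) seqs_Cons[OF jn, of y0 y' X] y by auto
  note QQ = QA[OF j1 jn Suc.prems(3)]
  have rec: "Rr j z (Gd y w) = Q j z (\<lambda>u. Tt j u (Rr (Suc j) u (\<lambda>xs. Gd y w (u # xs))))"
    by (rule Rr_rec[OF j1 jn Suc.prems(3)])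
  have zero: "Tt j u (Rr (Suc j) u (\<lambda>_. 0)) = 0" if "u \<in> X j" for u
    using Rr_zero[of "Suc j" u] Tt_zero[OF j1 jn that] that by simp
  show ?case
  proof (cases "y0 = w0")
    case True
    have wmax: "\<forall>c\<in>seqs X (Suc j) n. Wr (Suc j) w0 c \<le> Wr (Suc j) w0 w'"
    proof
      fix c assume c: "c \<in> seqs X (Suc j) n"
      have "w0 # c \<in> seqs X j n" using seqs_Cons[OF jn, of w0 c X] w0 c by simp
      hence "Wr j z (w0 # c) \<le> Wr j z (w0 # w')" using Suc.prems(5) w by simp
      hence "(upper (Q j z) (ind w0) * upper (S j w0) (ind (obs j))) * Wr (Suc j) w0 c \<le>
             (upper (Q j z) (ind w0) * upper (S j w0) (ind (obs j))) * Wr (Suc j) w0 w'"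
        unfolding Wr_cons[OF j1 jn c] Wr_cons[OF j1 jn w'] by (simp add: mult.assoc)
      thus "Wr (Suc j) w0 c \<le> Wr (Suc j) w0 w'"
        using Wr_cons_pos[OF j1 jn Suc.prems(3) w0] by (simp add: mult_le_cancel_left_pos)
    qed
    have IH: "Rr (Suc j) w0 (Gd y' w') \<le> 0"
      using Suc.hyps(1)[of "Suc j" w0 w' y'] Suc.hyps(2) jn w0 w' y' wmax by simp
    have "Q j z (\<lambda>u. Tt j u (Rr (Suc j) u (\<lambda>xs. Gd y w (u # xs)))) \<le> Q j z (\<lambda>u. 0)"
    proof (rule cohA.mono[OF QQ])
      fix u assume u: "u \<in> X j"
      show "Tt j u (Rr (Suc j) u (\<lambda>xs. Gd y w (u # xs))) \<le> 0"
      proof (cases "u = w0")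
        case True
        have "(\<lambda>xs. Gd y w (u # xs)) = Gd y' w'" unfolding y w Gd_def using True \<open>y0 = w0\<close> by auto
        thus ?thesis using IH Tt_mono[OF j1 jn u, of _ 0] Tt_zero[OF j1 jn u] True by simp
      next
        case False
        have "(\<lambda>xs. Gd y w (u # xs)) = (\<lambda>_. 0)" unfolding y w Gd_def using False \<open>y0 = w0\<close> by auto
        thus ?thesis using zero[OF u] by simp
      qed
    qed
    thus ?thesis using rec cohA.zero[OF QQ] by simp
  next
    case False
    define a where "a = upper (S j y0) (ind (obs j)) * Wr (Suc j) y0 y'"
    define b where "b = upper (S j w0) (ind (obs j)) * Wr (Suc j) w0 w'"
    have Wy: "0 \<le> Wr (Suc j) y0 y'" using Wr_pos[of "Suc j" y0 y'] jn y0 y' by simp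
    have Ww: "0 \<le> Wr (Suc j) w0 w'" using Wr_pos[of "Suc j" w0 w'] jn w0 w' by simp
    have a0: "0 \<le> a" unfolding a_def using Su_pos[OF j1 jn y0] Wy by simp
    have b0: "0 \<le> b" unfolding b_def using Su_pos[OF j1 jn w0] Ww by simp
    have "Q j z (\<lambda>u. Tt j u (Rr (Suc j) u (\<lambda>xs. Gd y w (u # xs)))) \<le> Q j z (\<lambda>u. a * ind y0 u - b * ind w0 u)"
    proof (rule cohA.mono[OF QQ])
      fix u assume u: "u \<in> X j"
      consider "u = y0" | "u = w0" | "u \<noteq> y0" "u \<noteq> w0" by blast
      thus "Tt j u (Rr (Suc j) u (\<lambda>xs. Gd y w (u # xs))) \<le> a * ind y0 u - b * ind w0 u"
      proof cases
        case 1
        have "(\<lambda>xs. Gd y w (u # xs)) = (\<lambda>xs. if xs = y' then 1 else 0)"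
          unfolding y w Gd_def using 1 False by auto
        moreover have "Rr (Suc j) y0 (\<lambda>xs. if xs = y' then 1 else 0) \<le> Wr (Suc j) y0 y'"
          using Rr_ind_le[of "Suc j" y0 y'] jn y0 y' by simp
        moreover have "Tt j y0 (Wr (Suc j) y0 y') \<le> a"
          unfolding a_def using Tt_pos[OF j1 jn y0 Wy] mult_right_mono[OF Sl_le[OF j1 jn y0] Wy]
          by (simp add: mult.commute)
        ultimately have "Tt j u (Rr (Suc j) u (\<lambda>xs. Gd y w (u # xs))) \<le> a"
          using Tt_mono[OF j1 jn y0] 1 by (metis order_trans)
        thus ?thesis using 1 False unfolding ind_def by simp
      next
        case 2
        have "(\<lambda>xs. Gd y w (u # xs)) = (\<lambda>xs. - (if xs = w' then 1 else 0))"
          unfolding y w Gd_def using 2 False by auto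
        moreover have "Rr (Suc j) w0 (\<lambda>xs. - (if xs = w' then 1 else 0)) = - Wr (Suc j) w0 w'"
          using Uexact[of "Suc j" w0 w'] jn w0 w' by simp
        ultimately have "Tt j u (Rr (Suc j) u (\<lambda>xs. Gd y w (u # xs))) = - b"
          using Tt_neg[OF j1 jn w0, of "- Wr (Suc j) w0 w'"] Ww 2 unfolding b_def by simp
        thus ?thesis using 2 False unfolding ind_def by simp
      next
        case 3
        have "(\<lambda>xs. Gd y w (u # xs)) = (\<lambda>_. 0)" unfolding y w Gd_def using 3 by auto
        thus ?thesis using zero[OF u] 3 unfolding ind_def by simp
      qed
    qed
    also have "\<dots> \<le> a * upper (Q j z) (ind y0) - b * upper (Q j z) (ind w0)"
      by (rule cohA.Q2[OF QQ a0 b0])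
    also have "\<dots> = Wr j z y - Wr j z w"
      unfolding y w Wr_cons[OF j1 jn y'] Wr_cons[OF j1 jn w'] a_def b_def by simp
    also have "\<dots> \<le> 0" using Suc.prems(5,6) by simp
    finally show ?thesis using rec by simp
  qed
qed

end

context hmm begin

lemma Wr_prefix: "1 \<le> j \<Longrightarrow> z \<in> X (j - 1) \<Longrightarrow> u @ c0 \<in> seqs X j n \<Longrightarrow>
  \<exists>\<kappa>\<ge>0. \<forall>c. u @ c \<in> seqs X j n \<longrightarrow> Wr j z (u @ c) = \<kappa> * Wr (j + length u) (last (z # u)) c"
proof (induction u arbitrary: j z c0)
  case Nil thus ?case by (intro exI[of _ 1]) simp
next
  case (Cons v u)
  have jn: "j \<le> n" using Cons.prems(3) seqs_jle by simp
  have v: "v \<in> X j" and uc0: "u @ c0 \<in> seqs X (Suc j) n"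
    using Cons.prems(3) seqs_Cons[OF jn, of v "u @ c0" X] by auto
  obtain \<kappa> where k: "\<kappa> \<ge> 0" and kk: "\<forall>c. u @ c \<in> seqs X (Suc j) n \<longrightarrow>
     Wr (Suc j) v (u @ c) = \<kappa> * Wr (Suc j + length u) (last (v # u)) c"
    using Cons.IH[of "Suc j" v c0] v uc0 by auto
  define \<kappa>' where "\<kappa>' = upper (Q j z) (ind v) * (upper (S j v) (ind (obs j)) * \<kappa>)"
  have "\<kappa>' \<ge> 0" unfolding \<kappa>'_def using Wr_cons_pos[OF Cons.prems(1) jn Cons.prems(2) v] k
    by (simp add: mult.assoc[symmetric])
  moreover have "Wr j z ((v # u) @ c) = \<kappa>' * Wr (j + length (v # u)) (last (z # v # u)) c"
    if c: "(v # u) @ c \<in> seqs X j n" for c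
  proof -
    have uc: "u @ c \<in> seqs X (Suc j) n" using c seqs_Cons[OF jn, of v "u @ c" X] by auto
    show ?thesis unfolding append_Cons Wr_cons[OF Cons.prems(1) jn uc] using kk uc
      unfolding \<kappa>'_def by simp
  qed
  ultimately show ?case by blast
qed

lemma K: "1 \<le> j \<Longrightarrow> j \<le> Suc n \<Longrightarrow> z \<in> X (j - 1) \<Longrightarrow> u @ c1 \<in> seqs X j n \<Longrightarrow> u @ c2 \<in> seqs X j n \<Longrightarrow>
  (\<forall>c\<in>seqs X (j + length u) n. Wr (j + length u) (last (z # u)) c \<le> Wr (j + length u) (last (z # u)) c2) \<Longrightarrow>
  y \<in> seqs X j n \<Longrightarrow> Rr j z (Gd y (u @ c2)) \<le> max (Rr j z (Gd y (u @ c1))) 0"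
proof (induction u arbitrary: j z y)
  case Nil
  have "Rr j z (Gd y c2) \<le> 0" using K0[of j z c2 y] Nil by simp
  thus ?case by simp
next
  case (Cons v u)
  have jn: "j \<le> n" using Cons.prems(4) seqs_jle by simp
  have j1: "1 \<le> j" using Cons.prems by simp
  have v: "v \<in> X j" and uc1: "u @ c1 \<in> seqs X (Suc j) n" and uc2: "u @ c2 \<in> seqs X (Suc j) n"
    using Cons.prems(4,5) seqs_Cons[OF jn, of v "u @ c1" X] seqs_Cons[OF jn, of v "u @ c2" X] by auto
  obtain y0 y' where y: "y = y0 # y'" using seqs_cases[OF jn Cons.prems(7)] by blast
  have y0: "y0 \<in> X j" and y': "y' \<in> seqs X (Suc j) n" using Cons.prems(7) seqs_Cons[OF jn, of y0 y' X] y by auto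
  note QQ = QA[OF j1 jn Cons.prems(3)]
  define I where "I c u' = Tt j u' (Rr (Suc j) u' (\<lambda>xs. Gd y (v # u @ c) (u' # xs)))" for c u'
  have rec: "Rr j z (Gd y (v # u @ c)) = Q j z (I c)" for c
    unfolding I_def by (rule Rr_rec[OF j1 jn Cons.prems(3)])
  have zero: "Tt j u' (Rr (Suc j) u' (\<lambda>_. 0)) = 0" if "u' \<in> X j" for u'
    using Rr_zero[of "Suc j" u'] Tt_zero[OF j1 jn that] that by simp
  have len: "j + length (v # u) \<le> Suc n"
    using seqs_len[OF Cons.prems(4)] by simp
  have c1: "c1 \<in> seqs X (j + length (v # u)) n"
    using seqs_append[OF len, of c1 X] Cons.prems(4) by simp
  show ?case
  proof (cases "y0 = v")
    case False
    have le: "I c2 u' \<le> I c1 u'" if u': "u' \<in> X j" for u'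
    proof (cases "u' = v")
      case True
      have f: "(\<lambda>xs. Gd y (v # u @ c) (u' # xs)) = (\<lambda>xs. - (if xs = u @ c then 1 else 0))" for c
        unfolding y Gd_def using True False by auto
      obtain \<kappa> where k: "\<kappa> \<ge> 0" and kk: "\<forall>c. u @ c \<in> seqs X (Suc j) n \<longrightarrow>
          Wr (Suc j) v (u @ c) = \<kappa> * Wr (Suc j + length u) (last (v # u)) c"
        using Wr_prefix[of "Suc j" v u c1] v uc1 by auto
      have "Wr (Suc j + length u) (last (v # u)) c1 \<le> Wr (Suc j + length u) (last (v # u)) c2"
        using Cons.prems(6) c1 by simp
      hence W: "Wr (Suc j) v (u @ c1) \<le> Wr (Suc j) v (u @ c2)"
        using kk uc1 uc2 k by (simp add: mult_left_mono)
      have "Rr (Suc j) v (\<lambda>xs. - (if xs = u @ c then 1 else 0)) = - Wr (Suc j) v (u @ c)"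
        if "u @ c \<in> seqs X (Suc j) n" for c using Uexact[of "Suc j" v "u @ c"] jn v that by simp
      thus ?thesis unfolding I_def f using True W uc1 uc2 Tt_mono[OF j1 jn u'] by simp
    next
      case False
      have "(\<lambda>xs. Gd y (v # u @ c2) (u' # xs)) = (\<lambda>xs. Gd y (v # u @ c1) (u' # xs))"
        unfolding Gd_def using False by auto
      thus ?thesis unfolding I_def by simp
    qed
    have "Q j z (I c2) \<le> Q j z (I c1)" using le by (rule cohA.mono[OF QQ])
    thus ?thesis using rec by simp
  next
    case True
    have IH: "Rr (Suc j) v (Gd y' (u @ c2)) \<le> max (Rr (Suc j) v (Gd y' (u @ c1))) 0"
      using Cons.IH[of "Suc j" v y'] jn v uc1 uc2 y' Cons.prems(6) by simp
    have f: "(\<lambda>xs. Gd y (v # u @ c) (v # xs)) = Gd y' (u @ c)" for c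
      unfolding y Gd_def using True by auto
    have f0: "u' \<noteq> v \<Longrightarrow> (\<lambda>xs. Gd y (v # u @ c) (u' # xs)) = (\<lambda>_. 0)" for c u'
      unfolding y Gd_def using True by auto
    have I0: "u' \<in> X j \<Longrightarrow> u' \<noteq> v \<Longrightarrow> I c u' = 0" for c u'
      unfolding I_def using f0 zero by simp
    have le: "I c2 u' \<le> max (I c1 u') 0" if u': "u' \<in> X j" for u'
    proof (cases "u' = v")
      case True
      have "I c2 u' \<le> Tt j u' (max (Rr (Suc j) v (Gd y' (u @ c1))) 0)"
        unfolding I_def True f using IH Tt_mono[OF j1 jn v] by simp
      thus ?thesis using Tt_max[OF j1 jn u'] unfolding I_def True f by simp
    next
      case False thus ?thesis using I0 u' by simp
    qed
    have "Q j z (I c2) \<le> Q j z (\<lambda>u'. max (I c1 u') 0)" using le by (rule cohA.mono[OF QQ])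
    also have "\<dots> \<le> max (Q j z (I c1)) 0"
    proof (cases "0 \<le> I c1 v")
      case True
      have "Q j z (\<lambda>u'. max (I c1 u') 0) = Q j z (I c1)"
      proof (rule cohA.dom[OF QQ])
        fix u' assume u': "u' \<in> X j"
        show "max (I c1 u') 0 = I c1 u'" using True I0[OF u'] by (cases "u' = v") auto
      qed
      thus ?thesis by simp
    next
      case False
      have "Q j z (\<lambda>u'. max (I c1 u') 0) = Q j z (\<lambda>u'. 0)"
      proof (rule cohA.dom[OF QQ])
        fix u' assume u': "u' \<in> X j"
        show "max (I c1 u') 0 = 0" using False I0[OF u'] by (cases "u' = v") auto
      qed
      thus ?thesis using cohA.zero[OF QQ] by simp
    qed
    finally show ?thesis using rec by simp
  qed
qed

lemma opt_char: "1 \<le> j \<Longrightarrow> j \<le> n \<Longrightarrow>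
  (w \<in> opt Q S X Os obs n j z) = (w \<in> seqs X j n \<and> (\<forall>y\<in>seqs X j n. Rr j z (Gd y w) \<le> 0))"
  unfolding opt_def lowerP_def Rr_def G_def Gd_def by simp

end

lemma ex_argmax: "finite A \<Longrightarrow> A \<noteq> {} \<Longrightarrow> \<exists>x\<in>A. \<forall>y\<in>A. (f y :: real) \<le> f x"
proof -
  assume f: "finite A" and ne: "A \<noteq> {}"
  have "Max (f ` A) \<in> f ` A" using f ne by (intro Max_in) auto
  then obtain x where x: "x \<in> A" "f x = Max (f ` A)" by auto
  thus ?thesis using f by (intro bexI[OF _ x(1)]) auto
qed

lemma Mog_I1: "z \<in> Pos Q S X obs k zp \<Longrightarrow> y \<in> opt Q S X Os obs n (k + 1) z \<Longrightarrow> z # y \<in> Mog Q S X Os obs n k zp"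
  unfolding Mog_def by blast

lemma Mog_I2: "z \<in> X k \<Longrightarrow> z \<notin> Pos Q S X obs k zp \<Longrightarrow> y \<in> seqs X (k + 1) n \<Longrightarrow> z # y \<in> Mog Q S X Os obs n k zp"
  unfolding Mog_def by blast

lemma Mog_D: "z # y \<in> Mog Q S X Os obs n k zp \<Longrightarrow> z \<in> Pos Q S X obs k zp \<Longrightarrow> y \<in> opt Q S X Os obs n (k + 1) z"
  unfolding Mog_def by blast

lemma kept_props: "kept Q S X Os obs n k zp p \<Longrightarrow> p \<noteq> [] \<and> (\<forall>i<length p. p ! i \<in> X (k + i)) \<and>
   alpha_opt Q S X obs n k zp p \<le> alpha_max Q S X obs n (k + length p - 1) (last p) \<and>
   (2 \<le> length p \<longrightarrow> (\<exists>r. p @ r \<in> Mog Q S X Os obs n k zp))"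
proof (induction rule: kept.induct)
  case (first x) thus ?case by simp
next
  case (extend p x)
  have "\<forall>i<length (p @ [x]). (p @ [x]) ! i \<in> X (k + i)"
    using extend by (auto simp: nth_append less_Suc_eq)
  moreover have "\<exists>r. (p @ [x]) @ r \<in> Mog Q S X Os obs n k zp" using extend by auto
  ultimately show ?case using extend by simp
qed

lemma alpha_opt_single: "alpha_opt Q S X obs n k zp [x] = alpha_opt1 Q S X obs n k zp x"
  unfolding alpha_opt_def by simp

lemma alpha_opt_snoc:
  assumes p: "p \<noteq> []"
  shows "alpha_opt Q S X obs n k zp (p @ [x]) = alpha_opt Q S X obs n k zp p /
    (upper (S (k + length p - 1) (last p)) (ind (obs (k + length p - 1))) * upper (Q (k + length p) (last p)) (ind x))"
proof -
  define L where "L = length p"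
  have L: "1 \<le> L" using p unfolding L_def by (cases p) auto
  define F where "F zs i = upper (S (i - 1) (zs ! (i - 1 - k))) (ind (obs (i - 1))) *
                                   upper (Q i (zs ! (i - 1 - k))) (ind (zs ! (i - k)))" for zs :: "'a list" and i
  have e: "k + length (p @ [x]) - 1 = Suc (k + L - 1)" using L unfolding L_def by simp
  have ins: "{k + 1..Suc (k + L - 1)} = insert (Suc (k + L - 1)) {k + 1..k + L - 1}"
    using L by (intro atLeastAtMostSuc_conv) simp
  have "(\<Prod>i\<in>{k + 1..k + length (p @ [x]) - 1}. F (p @ [x]) i) =
     F (p @ [x]) (Suc (k + L - 1)) * (\<Prod>i\<in>{k + 1..k + L - 1}. F (p @ [x]) i)"
    unfolding e ins by (intro prod.insert) auto
  also have "(\<Prod>i\<in>{k + 1..k + L - 1}. F (p @ [x]) i) = (\<Prod>i\<in>{k + 1..k + L - 1}. F p i)"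
  proof (rule prod.cong)
    fix i assume "i \<in> {k + 1..k + L - 1}"
    hence "i - 1 - k < L" "i - k < L" by auto
    thus "F (p @ [x]) i = F p i" unfolding F_def L_def by (simp add: nth_append)
  qed simp
  also have "F (p @ [x]) (Suc (k + L - 1)) =
     upper (S (k + length p - 1) (last p)) (ind (obs (k + length p - 1))) * upper (Q (k + length p) (last p)) (ind x)"
  proof -
    have 1: "Suc (k + L - 1) - 1 - k = L - 1" "Suc (k + L - 1) - k = L" "Suc (k + L - 1) - 1 = k + L - 1"
      "Suc (k + L - 1) = k + L" using L by auto
    have 2: "(p @ [x]) ! (L - 1) = last p" using L p unfolding L_def by (simp add: nth_append last_conv_nth)
    have 3: "(p @ [x]) ! L = x" unfolding L_def by simp
    have 4: "(p @ [x]) ! (length p - Suc 0) = last p" using 2 unfolding L_def by simp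
    show ?thesis unfolding F_def 1 2 3 by (simp add: L_def 4)
  qed
  finally have P: "(\<Prod>i\<in>{k + 1..k + length (p @ [x]) - 1}. F (p @ [x]) i) =
     (upper (S (k + length p - 1) (last p)) (ind (obs (k + length p - 1))) * upper (Q (k + length p) (last p)) (ind x))
      * (\<Prod>i\<in>{k + 1..k + length p - 1}. F p i)" unfolding L_def .
  have h: "(p @ [x]) ! 0 = p ! 0" using p by (cases p) auto
  show ?thesis unfolding alpha_opt_def F_def[symmetric] P h by (simp add: field_simps)
qed

context hmm begin

lemma seqsX_ne: "1 \<le> j \<Longrightarrow> seqs X j n \<noteq> {}" using finX by (intro seqs_ne) auto
lemma seqsX_fin: "1 \<le> j \<Longrightarrow> finite (seqs X j n)" using finX by (intro seqs_fin) auto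

lemma max_set: assumes j: "1 \<le> j" "j \<le> n" "x \<in> X j"
  shows "{F zs | zs. zs \<in> seqs X j n \<and> zs ! 0 = x} = (\<lambda>c. F (x # c)) ` seqs X (Suc j) n"
proof (intro equalityI subsetI)
  fix a assume "a \<in> {F zs | zs. zs \<in> seqs X j n \<and> zs ! 0 = x}"
  then obtain zs where a: "a = F zs" and zs: "zs \<in> seqs X j n" "zs ! 0 = x" by blast
  obtain v c where vc: "zs = v # c" using seqs_cases[OF j(2) zs(1)] by blast
  have "c \<in> seqs X (Suc j) n" using zs(1) seqs_Cons[OF j(2), of v c X] vc by simp
  moreover have "zs = x # c" using vc zs(2) by simp
  ultimately show "a \<in> (\<lambda>c. F (x # c)) ` seqs X (Suc j) n" using a by simp
next
  fix a assume "a \<in> (\<lambda>c. F (x # c)) ` seqs X (Suc j) n"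
  then obtain c where c: "c \<in> seqs X (Suc j) n" "a = F (x # c)" by auto
  have "x # c \<in> seqs X j n" using seqs_Cons[OF j(2), of x c X] c j(3) by simp
  moreover have "(x # c) ! 0 = x" by simp
  ultimately show "a \<in> {F zs | zs. zs \<in> seqs X j n \<and> zs ! 0 = x}" using c(2) by blast
qed

lemmas amax_set = max_set[where F="alpha Q S obs n j" for j]
lemmas bmax_set = max_set[where F="beta Q S obs n j" for j]

lemma amax_ge: "1 \<le> j \<Longrightarrow> j \<le> n \<Longrightarrow> x \<in> X j \<Longrightarrow> c \<in> seqs X (Suc j) n \<Longrightarrow> alpha Q S obs n j (x # c) \<le> alpha_max Q S X obs n j x"
  unfolding alpha_max_def amax_set by (intro Max_ge finite_imageI seqsX_fin) auto

lemma amax_attain: "1 \<le> j \<Longrightarrow> j \<le> n \<Longrightarrow> x \<in> X j \<Longrightarrow> \<exists>c\<in>seqs X (Suc j) n. alpha_max Q S X obs n j x = alpha Q S obs n j (x # c)"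
proof -
  assume j: "1 \<le> j" "j \<le> n" "x \<in> X j"
  have "alpha_max Q S X obs n j x \<in> (\<lambda>c. alpha Q S obs n j (x # c)) ` seqs X (Suc j) n"
    unfolding alpha_max_def amax_set[OF j] using seqsX_fin[of "Suc j"] seqsX_ne[of "Suc j"] by (intro Max_in) auto
  thus ?thesis by auto
qed

lemma bmax_attain: "1 \<le> j \<Longrightarrow> j \<le> n \<Longrightarrow> x \<in> X j \<Longrightarrow> \<exists>c\<in>seqs X (Suc j) n. beta_max Q S X obs n j x = beta Q S obs n j (x # c)"
proof -
  assume j: "1 \<le> j" "j \<le> n" "x \<in> X j"
  have "beta_max Q S X obs n j x \<in> (\<lambda>c. beta Q S obs n j (x # c)) ` seqs X (Suc j) n"
    unfolding beta_max_def bmax_set[OF j] using seqsX_fin[of "Suc j"] seqsX_ne[of "Suc j"] by (intro Max_in) auto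
  thus ?thesis by auto
qed

lemma beta_le_alpha: assumes j: "1 \<le> j" "j \<le> n" and zs: "zs \<in> seqs X j n"
  shows "0 \<le> beta Q S obs n j zs \<and> beta Q S obs n j zs \<le> alpha Q S obs n j zs"
proof -
  have len: "length zs = Suc n - j" using seqs_len[OF zs] .
  have fac: "0 \<le> S i (zs ! (i - j)) (ind (obs i)) * Q i (zs ! (i - j - 1)) (ind (zs ! (i - j))) \<and>
     S i (zs ! (i - j)) (ind (obs i)) * Q i (zs ! (i - j - 1)) (ind (zs ! (i - j)))
     \<le> upper (S i (zs ! (i - j))) (ind (obs i)) * upper (Q i (zs ! (i - j - 1))) (ind (zs ! (i - j)))"
    if i: "i \<in> {j + 1..n}" for i
  proof -
    have i1: "1 \<le> i" "i \<le> n" using i j by auto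
    have l1: "i - j < length zs" "j + (i - j) = i" using len i by auto
    have l2: "i - j - 1 < length zs" "j + (i - j - 1) = i - 1" using len i by auto
    have a: "zs ! (i - j) \<in> X i" using seqs_nth[OF zs l1(1)] l1(2) by simp
    have b: "zs ! (i - j - 1) \<in> X (i - 1)" using seqs_nth[OF zs l2(1)] l2(2) by simp
    note SS' = SA[OF i1 a] and QQ' = QA[OF i1 b]
    have A0: "0 \<le> S i (zs ! (i - j)) (ind (obs i))" by (rule cohA.ind_nonneg[OF SS'])
    have A1: "S i (zs ! (i - j)) (ind (obs i)) \<le> upper (S i (zs ! (i - j))) (ind (obs i))" by (rule cohA.le_upper[OF SS'])
    have B0: "0 \<le> Q i (zs ! (i - j - 1)) (ind (zs ! (i - j)))" by (rule cohA.ind_nonneg[OF QQ'])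
    have B1: "Q i (zs ! (i - j - 1)) (ind (zs ! (i - j))) \<le> upper (Q i (zs ! (i - j - 1))) (ind (zs ! (i - j)))"
      by (rule cohA.le_upper[OF QQ'])
    have A2: "0 \<le> upper (S i (zs ! (i - j))) (ind (obs i))" using A0 A1 by linarith
    show ?thesis by (rule conjI[OF mult_nonneg_nonneg[OF A0 B0] mult_mono[OF A1 B1 A2 B0]])
  qed
  have "0 < length zs" using len j by simp
  hence z0: "zs ! 0 \<in> X j" using seqs_nth[OF zs, of 0] by simp
  note S0 = SA[OF j z0]
  have p0: "0 \<le> (\<Prod>i\<in>{j + 1..n}. S i (zs ! (i - j)) (ind (obs i)) * Q i (zs ! (i - j - 1)) (ind (zs ! (i - j))))"
    by (rule prod_nonneg) (rule conjunct1[OF fac])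
  have p1: "(\<Prod>i\<in>{j + 1..n}. S i (zs ! (i - j)) (ind (obs i)) * Q i (zs ! (i - j - 1)) (ind (zs ! (i - j))))
     \<le> (\<Prod>i\<in>{j + 1..n}. upper (S i (zs ! (i - j))) (ind (obs i)) * upper (Q i (zs ! (i - j - 1))) (ind (zs ! (i - j))))"
    by (rule prod_mono) (rule fac)
  have s0: "0 \<le> S j (zs ! 0) (ind (obs j))" by (rule cohA.ind_nonneg[OF S0])
  have s1: "S j (zs ! 0) (ind (obs j)) \<le> upper (S j (zs ! 0)) (ind (obs j))" by (rule cohA.le_upper[OF S0])
  have s2: "0 \<le> upper (S j (zs ! 0)) (ind (obs j))" using s0 s1 by linarith
  show ?thesis unfolding beta_def alpha_def
    by (rule conjI[OF mult_nonneg_nonneg[OF s0 p0] mult_mono[OF s1 p1 s2 p0]])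
qed

lemma alpha_Wr: "j < n \<Longrightarrow> alpha Q S obs n j (x # c) = upper (S j x) (ind (obs j)) * Wr (Suc j) x c"
  unfolding Wr_def using alpha_cons[of j x c] by simp

lemma alpha_nonneg: "1 \<le> j \<Longrightarrow> j < n \<Longrightarrow> x \<in> X j \<Longrightarrow> c \<in> seqs X (Suc j) n \<Longrightarrow> 0 \<le> alpha Q S obs n j (x # c)"
  unfolding alpha_Wr using Su_pos[of j x] Wr_pos[of "Suc j" x c] by simp

lemma tau_le: assumes k: "1 \<le> k" "k \<le> n" and zp: "zp \<in> X (k - 1)" and x: "x' \<in> X k" "xh \<in> X k"
  shows "tau Q k zp x' xh \<le> upper (Q k zp) (ind x') / upper (Q k zp) (ind xh)"
proof -
  note QQ = QA[OF k zp]
  define a0 where "a0 = upper (Q k zp) (ind x') / upper (Q k zp) (ind xh)"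
  have pos: "0 < upper (Q k zp) (ind xh)" using posQ[OF k zp x(2)] .
  have a0: "0 \<le> a0" unfolding a0_def using pos cohA.ind_upper_nonneg[OF QQ, of x'] by simp
  have "Q k zp (\<lambda>y. ind x' y + (- a0) * ind xh y) \<le> upper (Q k zp) (ind x') + Q k zp (\<lambda>y. (- a0) * ind xh y)"
    by (rule cohA.upper_add[OF QQ])
  also have "Q k zp (\<lambda>y. (- a0) * ind xh y) = - a0 * upper (Q k zp) (ind xh)"
    using a0 by (intro cohA.scale_neg[OF QQ]) simp
  also have "upper (Q k zp) (ind x') + - a0 * upper (Q k zp) (ind xh) = 0" unfolding a0_def using pos by simp
  finally have "a0 \<in> {a. a \<ge> 0 \<and> Q k zp (\<lambda>y. ind x' y - a * ind xh y) \<le> 0}" using a0 by simp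
  hence "tau Q k zp x' xh \<le> a0" unfolding tau_def by (intro cInf_lower) (auto intro: bdd_belowI[of _ 0])
  thus ?thesis unfolding a0_def .
qed

end

context hmm begin

lemma optK0: assumes "1 \<le> j" "j < n" "z \<in> X j" "c \<in> seqs X (Suc j) n"
    "\<forall>c'\<in>seqs X (Suc j) n. Wr (Suc j) z c' \<le> Wr (Suc j) z c"
  shows "c \<in> opt Q S X Os obs n (Suc j) z"
proof -
  have "\<forall>y\<in>seqs X (Suc j) n. Rr (Suc j) z (Gd y c) \<le> 0"
    using K0[of "Suc j" z c] assms by simp
  thus ?thesis using opt_char[of "Suc j" c z] assms by simp
qed

lemma Max_ins0_le: "finite B \<Longrightarrow> (0::real) \<le> M \<Longrightarrow> (\<And>b. b \<in> B \<Longrightarrow> b \<le> M) \<Longrightarrow> Max (insert 0 B) \<le> M"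
  by (intro Max.boundedI) auto

lemma main:
  assumes k: "1 \<le> k" "k \<le> n - 1" and zp: "zp \<in> X (k - 1)" and s: "k \<le> s" "s \<le> n"
    and p: "length p = s - k" and kept: "p = [] \<or> kept Q S X Os obs n k zp p"
  shows "\<exists>x \<in> X s. (\<exists>r. p @ [x] @ r \<in> Mog Q S X Os obs n k zp) \<and>
                   alpha_max Q S X obs n s x \<ge> alpha_opt Q S X obs n k zp (p @ [x])"
proof -
  have kn: "k < n" using k n by simp
  show ?thesis
  proof (cases "p = []")
    case True
    hence sk: "s = k" using p s by simp
    have fk: "finite (X k)" "X k \<noteq> {}" using finX[of k] k kn by auto
    obtain xh where xh: "xh \<in> X k" and xmax: "\<forall>y\<in>X k. alpha_max Q S X obs n k y * upper (Q k zp) (ind y)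
        \<le> alpha_max Q S X obs n k xh * upper (Q k zp) (ind xh)"
      using ex_argmax[OF fk, of "\<lambda>y. alpha_max Q S X obs n k y * upper (Q k zp) (ind y)"] by blast
    have Mg: "\<exists>c. xh # c \<in> Mog Q S X Os obs n k zp"
    proof (cases "xh \<in> Pos Q S X obs k zp")
      case True
      obtain cs where cs: "cs \<in> seqs X (Suc k) n" and cm: "\<forall>c'\<in>seqs X (Suc k) n. Wr (Suc k) xh c' \<le> Wr (Suc k) xh cs"
        using ex_argmax[OF seqsX_fin seqsX_ne, of "Suc k" "Wr (Suc k) xh"] by auto
      have "cs \<in> opt Q S X Os obs n (Suc k) xh" using optK0[OF k(1) kn xh cs cm] .
      thus ?thesis using Mog_I1[OF True, of cs] by auto
    next
      case False
      obtain c where c: "c \<in> seqs X (Suc k) n" using seqsX_ne[of "Suc k"] by auto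
      thus ?thesis using Mog_I2[OF xh False, of c] by auto
    qed
    have am0: "0 \<le> alpha_max Q S X obs n k xh"
    proof -
      obtain c where c: "c \<in> seqs X (Suc k) n" using seqsX_ne[of "Suc k"] by auto
      thus ?thesis using amax_ge[OF k(1) _ xh c] alpha_nonneg[OF k(1) kn xh c] kn by simp
    qed
    have Qpos: "0 < upper (Q k zp) (ind xh)" using posQ[OF k(1) _ zp xh] kn by simp
    have bnd: "beta_max Q S X obs n k x * tau Q k zp x xh \<le> alpha_max Q S X obs n k xh"
      if x: "x \<in> X k" "x \<noteq> xh" for x
    proof -
      obtain cb where cb: "cb \<in> seqs X (Suc k) n" and bm: "beta_max Q S X obs n k x = beta Q S obs n k (x # cb)"
        using bmax_attain[OF k(1) _ x(1)] kn by auto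
      have xcb: "x # cb \<in> seqs X k n" using seqs_Cons[of k n x cb X] kn x cb by simp
      have b0: "0 \<le> beta_max Q S X obs n k x" and b1: "beta_max Q S X obs n k x \<le> alpha Q S obs n k (x # cb)"
        using beta_le_alpha[OF k(1) _ xcb] kn bm by auto
      have b2: "alpha Q S obs n k (x # cb) \<le> alpha_max Q S X obs n k x" using amax_ge[OF k(1) _ x(1) cb] kn by simp
      define a0 where "a0 = upper (Q k zp) (ind x) / upper (Q k zp) (ind xh)"
      have a0: "0 \<le> a0" unfolding a0_def using Qpos cohA.ind_upper_nonneg[OF QA[OF k(1) _ zp], of x] kn by simp
      have t: "tau Q k zp x xh \<le> a0" unfolding a0_def using tau_le[OF k(1) _ zp x(1) xh] kn by simp
      have "beta_max Q S X obs n k x * tau Q k zp x xh \<le> beta_max Q S X obs n k x * a0"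
        using t b0 by (rule mult_left_mono)
      also have "\<dots> \<le> alpha_max Q S X obs n k x * a0" using b1 b2 a0 by (intro mult_right_mono) auto
      also have "\<dots> = alpha_max Q S X obs n k x * upper (Q k zp) (ind x) / upper (Q k zp) (ind xh)"
        unfolding a0_def by simp
      also have "\<dots> \<le> alpha_max Q S X obs n k xh"
        using xmax x(1) Qpos by (simp add: pos_divide_le_eq)
      finally show ?thesis .
    qed
    have fin: "finite {beta_max Q S X obs n k x * tau Q k zp x xh | x. x \<in> X k \<and> x \<noteq> xh}"
      using fk by (intro finite_image_set) auto
    have "alpha_opt1 Q S X obs n k zp xh \<le> alpha_max Q S X obs n k xh"
      unfolding alpha_opt1_def using fin am0 bnd by (intro Max_ins0_le) auto
    hence "alpha_opt Q S X obs n k zp (p @ [xh]) \<le> alpha_max Q S X obs n s xh"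
      using True sk alpha_opt_single[of Q S X obs n k zp xh] by simp
    thus ?thesis using Mg xh True sk by auto
  next
    case False
    hence kp: "kept Q S X Os obs n k zp p" using kept by simp
    note KP = kept_props[OF kp]
    have pel: "\<forall>i<length p. p ! i \<in> X (k + i)" using KP by blast
    have aopt: "alpha_opt Q S X obs n k zp p \<le> alpha_max Q S X obs n (k + length p - 1) (last p)" using KP by blast
    have mog: "2 \<le> length p \<longrightarrow> (\<exists>r. p @ r \<in> Mog Q S X Os obs n k zp)" using KP by blast
    define L where "L = length p"
    have L1: "1 \<le> L" using False unfolding L_def by (cases p) auto
    have sL: "s = k + L" using p s unfolding L_def by simp
    define y where "y = last p"
    have y: "y \<in> X (s - 1)"
    proof -
      have lt: "L - 1 < length p" using L1 unfolding L_def by simp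
      have "p ! (L - 1) \<in> X (k + (L - 1))" using pel lt by blast
      moreover have "p ! (L - 1) = last p" using False unfolding L_def by (simp add: last_conv_nth)
      moreover have "k + (L - 1) = s - 1" using sL L1 by simp
      ultimately show ?thesis unfolding y_def by simp
    qed
    have s1: "1 \<le> s - 1" "s - 1 < n" "1 \<le> s" using sL L1 k s by auto
    obtain cs where cs: "cs \<in> seqs X s n" and cm: "\<forall>c'\<in>seqs X s n. Wr s y c' \<le> Wr s y cs"
      using ex_argmax[OF seqsX_fin seqsX_ne, of s "Wr s y"] s1 by auto
    obtain x r where xr: "cs = x # r" using seqs_cases[OF s(2) cs] by blast
    have x: "x \<in> X s" and r: "r \<in> seqs X (Suc s) n" using cs seqs_Cons[OF s(2), of x r X] xr by auto
    have ss: "Suc (s - 1) = s" using s1 by simp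
    define Su where "Su = upper (S (s - 1) y) (ind (obs (s - 1)))"
    define Qu where "Qu = upper (Q s y) (ind x)"
    have Su: "0 < Su" unfolding Su_def using Su_pos[of "s - 1" y] s1 y by simp
    have Qu: "0 < Qu" unfolding Qu_def using posQ[of s y x] s1 s y x by simp
    have e1: "alpha_opt Q S X obs n k zp (p @ [x]) = alpha_opt Q S X obs n k zp p / (Su * Qu)"
      unfolding alpha_opt_snoc[OF False] Su_def Qu_def y_def using sL unfolding L_def by simp
    obtain c0 where c0: "c0 \<in> seqs X s n" and am1: "alpha_max Q S X obs n (s - 1) y = alpha Q S obs n (s - 1) (y # c0)"
      using amax_attain[of "s - 1" y] s1 y ss by auto
    have "alpha Q S obs n (s - 1) (y # c0) = Su * Wr s y c0"
      unfolding Su_def using alpha_Wr[of "s - 1" y c0] s1 ss by simp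
    also have "\<dots> \<le> Su * Wr s y cs" using cm c0 Su by (intro mult_left_mono) auto
    also have "Wr s y cs = Qu * alpha Q S obs n s cs" unfolding Wr_def Qu_def xr using s by simp
    finally have am2: "alpha_max Q S X obs n (s - 1) y \<le> (Su * Qu) * alpha Q S obs n s cs"
      using am1 by (simp add: mult.assoc)
    have am3: "alpha Q S obs n s cs \<le> alpha_max Q S X obs n s x" unfolding xr using amax_ge[OF s1(3) s(2) x r] .
    have "alpha_opt Q S X obs n k zp p \<le> (Su * Qu) * alpha Q S obs n s cs"
      using aopt am2 sL unfolding y_def L_def by simp
    hence "alpha_opt Q S X obs n k zp (p @ [x]) \<le> alpha Q S obs n s cs"
      unfolding e1 using Su Qu by (simp add: pos_divide_le_eq mult.commute)
    hence A: "alpha_opt Q S X obs n k zp (p @ [x]) \<le> alpha_max Q S X obs n s x" using am3 by simp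
    obtain z p' where zp': "p = z # p'" using False by (cases p) auto
    have z: "z \<in> X k" using pel zp' by (metis add_0_right length_greater_0_conv list.discI nth_Cons_0)
    have lenp': "Suc k + length p' = s" using sL zp' unfolding L_def by simp
    have p'el: "\<forall>i<length p'. p' ! i \<in> X (Suc k + i)"
    proof (intro allI impI)
      fix i assume i: "i < length p'"
      have "Suc i < length p" using i zp' by simp
      hence "p ! Suc i \<in> X (k + Suc i)" using pel by blast
      thus "p' ! i \<in> X (Suc k + i)" using zp' by simp
    qed
    have pcs: "p' @ cs \<in> seqs X (Suc k) n"
      using seqs_append[of "Suc k" p' n cs X] lenp' s p'el cs by simp
    have eq: "p @ [x] @ r = z # (p' @ cs)" using zp' xr by simp
    have M: "z # (p' @ cs) \<in> Mog Q S X Os obs n k zp"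
    proof (cases "z \<in> Pos Q S X obs k zp")
      case False
      have pcs': "p' @ cs \<in> seqs X (k + 1) n" using pcs by simp
      thus ?thesis using Mog_I2[OF z False pcs'] by simp
    next
      case True
      have "p' @ cs \<in> opt Q S X Os obs n (Suc k) z"
      proof (cases "p' = []")
        case True
        have "s = Suc k" "y = z" using lenp' True zp' unfolding y_def by auto
        thus ?thesis using optK0[OF k(1) kn z, of cs] cs cm True by simp
      next
        case False
        have "2 \<le> length p" using zp' False by (cases p') auto
        then obtain r0 where "p @ r0 \<in> Mog Q S X Os obs n k zp" using mog by blast
        hence "z # (p' @ r0) \<in> Mog Q S X Os obs n k zp" using zp' by simp
        hence o1: "p' @ r0 \<in> opt Q S X Os obs n (Suc k) z" using Mog_D True by fastforce
        have o2: "p' @ r0 \<in> seqs X (Suc k) n" "\<forall>y'\<in>seqs X (Suc k) n. Rr (Suc k) z (Gd y' (p' @ r0)) \<le> 0"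
          using o1 opt_char[of "Suc k" "p' @ r0" z] kn by auto
        have lz: "last (z # p') = y" unfolding y_def zp' ..
        have "\<forall>y'\<in>seqs X (Suc k) n. Rr (Suc k) z (Gd y' (p' @ cs)) \<le> 0"
        proof
          fix y' assume y': "y' \<in> seqs X (Suc k) n"
          have "Rr (Suc k) z (Gd y' (p' @ cs)) \<le> max (Rr (Suc k) z (Gd y' (p' @ r0))) 0"
            using K[of "Suc k" z p' r0 cs y'] kn z o2(1) pcs cm lenp' lz y' by simp
          thus "Rr (Suc k) z (Gd y' (p' @ cs)) \<le> 0" using o2(2) y' by simp
        qed
        thus ?thesis using opt_char[of "Suc k" "p' @ cs" z] kn pcs by simp
      qed
      thus ?thesis using Mog_I1[OF True] by simp
    qed
    have "p @ [x] @ r \<in> Mog Q S X Os obs n k zp" using M eq by simp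
    thus ?thesis using A x by blast
  qed
qed

end

theorem theorem4:
  fixes Q :: "nat \<Rightarrow> 'x \<Rightarrow> ('x \<Rightarrow> real) \<Rightarrow> real"
    and S :: "nat \<Rightarrow> 'x \<Rightarrow> ('o \<Rightarrow> real) \<Rightarrow> real"
    and X :: "nat \<Rightarrow> 'x set" and Os :: "nat \<Rightarrow> 'o set"
    and obs :: "nat \<Rightarrow> 'o" and n k s :: nat and x0 zp :: 'x and p :: "'x list"
  assumes n: "n \<ge> 1"
    and X0: "X 0 = {x0}"
    and finX: "\<And>i. 1 \<le> i \<Longrightarrow> i \<le> n \<Longrightarrow> finite (X i) \<and> X i \<noteq> {}"
    and finO: "\<And>i. 1 \<le> i \<Longrightarrow> i \<le> n \<Longrightarrow> finite (Os i) \<and> Os i \<noteq> {}"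
    and obs: "\<And>i. 1 \<le> i \<Longrightarrow> i \<le> n \<Longrightarrow> obs i \<in> Os i"
    and cohQ: "\<And>i z. 1 \<le> i \<Longrightarrow> i \<le> n \<Longrightarrow> z \<in> X (i - 1) \<Longrightarrow> coherent_lp (X i) (Q i z)"
    and cohS: "\<And>i z. 1 \<le> i \<Longrightarrow> i \<le> n \<Longrightarrow> z \<in> X i \<Longrightarrow> coherent_lp (Os i) (S i z)"
    and posQ: "\<And>i z y. 1 \<le> i \<Longrightarrow> i \<le> n \<Longrightarrow> z \<in> X (i - 1) \<Longrightarrow> y \<in> X i
                 \<Longrightarrow> upper (Q i z) (ind y) > 0"
    and posS: "\<And>i z ob. 1 \<le> i \<Longrightarrow> i \<le> n \<Longrightarrow> z \<in> X i \<Longrightarrow> ob \<in> Os i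
                 \<Longrightarrow> upper (S i z) (ind ob) > 0"
    and k: "1 \<le> k" "k \<le> n - 1"
    and zp: "zp \<in> X (k - 1)"
    and s: "k \<le> s" "s \<le> n"
    and p: "length p = s - k"
    and kept: "p = [] \<or> kept Q S X Os obs n k zp p"
  shows "\<exists>x \<in> X s. (\<exists>r. p @ [x] @ r \<in> Mog Q S X Os obs n k zp) \<and>
                   alpha_max Q S X obs n s x \<ge> alpha_opt Q S X obs n k zp (p @ [x])"
  proof -
  interpret hmm Q S X Os obs n
    by (rule hmm.intro[OF n finX finO obs cohQ cohS posQ posS])
  show ?thesis by (rule main[OF k zp s p kept])
qed

end
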